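(* Let $X=(X_n)_{n\in\mathbb{Z}}$ be an i.i.d. sequence of random variables with values in $\{-1,0,1,2,\dots\}$, whose mean exists, with $0<\mathbb{P}[X_0=-1]\le1$ and $\mathbb{E}[X_0]\le0$. Then the descendant tree $[D(0),0]$ of $0$ in the record graph of $X$ (with children ordered by the order of $\mathbb{Z}$) is an ordered Galton-Watson tree with offspring distribution equal to the distribution of $X_0+1$.
   Context: The record map is $R_X(i)=\inf\{n>i: \sum_{l=i}^{n-1}X_l\ge0\}$ if this set is nonempty, and $R_X(i)=i$ otherwise; the record graph has vertex set $\mathbb{Z}$ and directed edges $i\to R_X(i)$ (child to parent) for $R_X(i)\ne i$. $D(0)$ is the set consisting of $0$ and all $j\ne0$ with $R_X^n(j)=0$ for some $n\ge1$, with the induced tree structure rooted at $0$. An ordered Galton-Watson tree with offspring distribution $\pi$ is the plane tree in which every vertex independently has a $\pi$-distributed number of children. *)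

theory Defs
  imports "HOL-Probability.Probability"
begin

definition record_map :: "(int \<Rightarrow> int) \<Rightarrow> int \<Rightarrow> int" where
  "record_map x i =
     (if \<exists>n>i. (\<Sum>l\<in>{i..<n}. x l) \<ge> 0
      then (LEAST n. n > i \<and> (\<Sum>l\<in>{i..<n}. x l) \<ge> 0)
      else i)"

definition desc0 :: "(int \<Rightarrow> int) \<Rightarrow> int set" where
  "desc0 x = {0} \<union> {j. j \<noteq> 0 \<and> (\<exists>n\<ge>1. (record_map x ^^ n) j = 0)}"

definition rchildren :: "(int \<Rightarrow> int) \<Rightarrow> int \<Rightarrow> int set" where
  "rchildren x v = {j \<in> desc0 x. record_map x j \<noteq> j \<and> record_map x j = v}"

text \<open>Ulam-Harris labelling of the descendant tree of 0, children ordered increasingly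
  in the order of Z: word u labels vertex v; the k-th child (0-based) of v gets u @ [k].\<close>
inductive desc_label :: "(int \<Rightarrow> int) \<Rightarrow> nat list \<Rightarrow> int \<Rightarrow> bool" for x where
  root: "desc_label x [] 0"
| child: "desc_label x u v \<Longrightarrow> j \<in> rchildren x v \<Longrightarrow>
          finite {j' \<in> rchildren x v. j' < j} \<Longrightarrow>
          k = card {j' \<in> rchildren x v. j' < j} \<Longrightarrow> desc_label x (u @ [k]) j"

definition desc_tree :: "(int \<Rightarrow> int) \<Rightarrow> nat list set" where
  "desc_tree x = {u. \<exists>v. desc_label x u v}"

definition plane_tree :: "nat list set \<Rightarrow> bool" where
  "plane_tree t \<longleftrightarrow> [] \<in> t \<and>
     (\<forall>u k. u @ [k] \<in> t \<longrightarrow> u \<in> t) \<and>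
     (\<forall>u k k'. u @ [k] \<in> t \<longrightarrow> k' < k \<longrightarrow> u @ [k'] \<in> t)"

definition nchild :: "nat list set \<Rightarrow> nat list \<Rightarrow> nat" where
  "nchild t u = card {k. u @ [k] \<in> t}"

definition trunc :: "nat list set \<Rightarrow> nat \<Rightarrow> nat list set" where
  "trunc t n = {u \<in> t. length u \<le> n}"

text \<open>These finite-dimensional laws determine the law of T.\<close>
definition ordered_GW :: "'a measure \<Rightarrow> ('a \<Rightarrow> nat list set) \<Rightarrow> (nat \<Rightarrow> real) \<Rightarrow> bool" where
  "ordered_GW M T \<pi> \<longleftrightarrow>
     (\<forall>n t. finite t \<and> plane_tree t \<and> (\<forall>u\<in>t. length u \<le> n) \<longrightarrow>
        {\<omega> \<in> space M. trunc (T \<omega>) n = t} \<in> sets M \<and>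
        measure M {\<omega> \<in> space M. trunc (T \<omega>) n = t} =
          (\<Prod>u\<in>{u \<in> t. length u < n}. \<pi> (nchild t u)))"

end

theory Submission
  imports Defs
begin

definition lbx :: "(int \<Rightarrow> int) \<Rightarrow> bool" where "lbx x \<longleftrightarrow> (\<forall>i. x i \<ge> -1)"
definition sh :: "(int \<Rightarrow> int) \<Rightarrow> int \<Rightarrow> int \<Rightarrow> int" where "sh x a = (\<lambda>i. x (i + a))"
definition Sw :: "(int \<Rightarrow> int) \<Rightarrow> int \<Rightarrow> nat \<Rightarrow> int" where
  "Sw x a m = (\<Sum>l\<in>{a - int m..<a}. x l)"
definition hashit :: "(int \<Rightarrow> int) \<Rightarrow> int \<Rightarrow> bool" where "hashit x a \<longleftrightarrow> (\<exists>m. Sw x a m < 0)"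
definition hit :: "(int \<Rightarrow> int) \<Rightarrow> int \<Rightarrow> nat" where "hit x a = (LEAST m. Sw x a m < 0)"
definition V :: "(int \<Rightarrow> int) \<Rightarrow> int \<Rightarrow> int" where "V x p = (\<Sum>l\<in>{p..<0}. x l)"

lemma sum_split_int:
  fixes p q r :: int
  assumes "p \<le> q" "q \<le> r"
  shows "(\<Sum>l\<in>{p..<r}. f l) = (\<Sum>l\<in>{p..<q}. f l) + (\<Sum>l\<in>{q..<r}. f l)"
proof -
  have "{p..<r} = {p..<q} \<union> {q..<r}" using assms by auto
  then show ?thesis by (simp add: sum.union_disjoint ivl_disj_int_two(3))
qed

lemma Sw_0[simp]: "Sw x a 0 = 0" by (simp add: Sw_def)

lemma Sw_Suc: "Sw x a (Suc m) = x (a - 1 - int m) + Sw x a m"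
proof -
  have "{a - int (Suc m)..<a} = insert (a - 1 - int m) {a - int m..<a}" by auto
  then show ?thesis by (simp add: Sw_def)
qed

lemma sh_sh[simp]: "sh (sh x a) b = sh x (b + a)"
  by (simp add: sh_def add.assoc)

lemma sh_apply: "sh x a i = x (i + a)" by (simp add: sh_def)

lemma sum_shift_int: "(\<Sum>l\<in>{p..<q}. x (l + a)) = (\<Sum>l\<in>{p+a..<q+a}. (x l :: int))" for p q a :: int
proof -
  have "(\<Sum>l\<in>{p+a..<q+a}. x l) = (\<Sum>l\<in>(\<lambda>l. l + a) ` {p..<q}. x l)"
    by (simp only: image_add_atLeastLessThan')
  also have "\<dots> = (\<Sum>l\<in>{p..<q}. x (l + a))"
    by (subst sum.reindex) (auto simp: inj_on_def)
  finally show ?thesis by simp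
qed

lemma Sw_sh: "Sw (sh x a) b m = Sw x (b + a) m"
  unfolding Sw_def sh_def by (simp add: sum_shift_int algebra_simps)

lemma hashit_sh: "hashit (sh x a) b = hashit x (b + a)"
  by (simp add: hashit_def Sw_sh)

lemma hit_sh: "hit (sh x a) b = hit x (b + a)"
  by (simp add: hit_def Sw_sh)

lemma lbx_sh: "lbx x \<Longrightarrow> lbx (sh x a)" by (simp add: lbx_def sh_def)

lemma hit_props:
  assumes "hashit x a" "lbx x"
  shows "Sw x a (hit x a) = -1" "hit x a > 0" "\<And>m. m < hit x a \<Longrightarrow> Sw x a m \<ge> 0"
proof -
  have neg: "Sw x a (hit x a) < 0" using assms unfolding hashit_def hit_def by (metis LeastI_ex)
  have ge: "\<And>m. m < hit x a \<Longrightarrow> Sw x a m \<ge> 0" unfolding hit_def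
    using not_less_Least by (metis not_less)
  show "\<And>m. m < hit x a \<Longrightarrow> Sw x a m \<ge> 0" by (rule ge)
  show pos: "hit x a > 0" using neg by (cases "hit x a") auto
  then obtain m where m: "hit x a = Suc m" by (cases "hit x a") auto
  have "Sw x a m \<ge> 0" using ge m by simp
  moreover have "x (a - 1 - int m) \<ge> -1" using assms(2) by (simp add: lbx_def)
  ultimately show "Sw x a (hit x a) = -1" using neg m Sw_Suc[of x a m] by simp
qed

lemma hit_unique:
  assumes "Sw x a N < 0" "\<And>m. m < N \<Longrightarrow> Sw x a m \<ge> 0"
  shows "hashit x a" "hit x a = N"
proof -
  show "hashit x a" using assms(1) by (auto simp: hashit_def)
  show "hit x a = N" unfolding hit_def
    by (rule Least_equality) (use assms in \<open>auto simp: not_less[symmetric]\<close>)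
qed

lemma V_Sw: "Sw x a m = V x (a - int m) - V x a" if "a \<le> 0"
  using that sum_split_int[of "a - int m" a 0 x] by (simp add: V_def Sw_def)

lemma sum_V: "j \<le> n \<Longrightarrow> n \<le> 0 \<Longrightarrow> (\<Sum>l\<in>{j..<n}. x l) = V x j - V x n"
  using sum_split_int[of j n 0 x] by (simp add: V_def)

lemma V_0[simp]: "V x 0 = 0" by (simp add: V_def)

lemma V_m1: "V x (-1) = x (-1)"
proof -
  have "{-1..<0::int} = {-1}" by auto
  then show ?thesis by (simp add: V_def)
qed

section \<open>Record map\<close>

lemma record_map_char:
  "record_map x j = v \<longleftrightarrow>
     (v = j \<and> (\<forall>n>j. (\<Sum>l\<in>{j..<n}. x l) < 0)) \<or>
     (j < v \<and> (\<Sum>l\<in>{j..<v}. x l) \<ge> 0 \<and> (\<forall>n. j < n \<and> n < v \<longrightarrow> (\<Sum>l\<in>{j..<n}. x l) < 0))"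
proof (cases "\<exists>n>j. (\<Sum>l\<in>{j..<n}. x l) \<ge> 0")
  case True
  define P where "P = (\<lambda>n. (\<Sum>l\<in>{j..<n}. x l) \<ge> 0)"
  from True obtain n where n: "n > j" "P n" unfolding P_def by auto
  have ex: "\<exists>d::nat. P (j + 1 + int d)"
    by (rule exI[of _ "nat (n - j - 1)"]) (use n in auto)
  define d0 where "d0 = (LEAST d::nat. P (j + 1 + int d))"
  define w where "w = j + 1 + int d0"
  have Pw: "P w" unfolding w_def d0_def by (rule LeastI_ex[OF ex])
  have nP: "\<not> P m" if "j < m" "m < w" for m
  proof -
    have "nat (m - j - 1) < d0" using that unfolding w_def by auto
    then have "\<not> P (j + 1 + int (nat (m - j - 1)))" unfolding d0_def by (rule not_less_Least)
    then show ?thesis using that by simp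
  qed
  have jw: "j < w" unfolding w_def by simp
  have R: "record_map x j = w"
    unfolding record_map_def using True
    apply simp
    apply (rule Least_equality)
    using Pw jw nP unfolding P_def by (auto simp: not_less[symmetric])
  have "((v = j \<and> (\<forall>n>j. (\<Sum>l\<in>{j..<n}. x l) < 0)) \<or>
     (j < v \<and> (\<Sum>l\<in>{j..<v}. x l) \<ge> 0 \<and> (\<forall>n. j < n \<and> n < v \<longrightarrow> (\<Sum>l\<in>{j..<n}. x l) < 0)))
     \<longleftrightarrow> v = w"
  proof
    assume A: "(v = j \<and> (\<forall>n>j. (\<Sum>l\<in>{j..<n}. x l) < 0)) \<or>
     (j < v \<and> (\<Sum>l\<in>{j..<v}. x l) \<ge> 0 \<and> (\<forall>n. j < n \<and> n < v \<longrightarrow> (\<Sum>l\<in>{j..<n}. x l) < 0))"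
    from A have "j < v" "P v" "\<And>n. j < n \<Longrightarrow> n < v \<Longrightarrow> \<not> P n"
      using True unfolding P_def by (auto simp: not_le)
    moreover have "\<not> v < w" using nP \<open>j < v\<close> \<open>P v\<close> by auto
    moreover have "\<not> w < v" using calculation(3)[of w] jw Pw by auto
    ultimately show "v = w" by simp
  next
    assume "v = w"
    then show "(v = j \<and> (\<forall>n>j. (\<Sum>l\<in>{j..<n}. x l) < 0)) \<or>
     (j < v \<and> (\<Sum>l\<in>{j..<v}. x l) \<ge> 0 \<and> (\<forall>n. j < n \<and> n < v \<longrightarrow> (\<Sum>l\<in>{j..<n}. x l) < 0))"
      using jw Pw nP unfolding P_def by (auto simp: not_le)
  qed
  then show ?thesis using R by auto
next
  case False
  then have R: "record_map x j = j" unfolding record_map_def by auto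
  show ?thesis using False R by (auto simp: not_le)
qed

lemma record_map_ge: "record_map x j \<ge> j"
  using record_map_char[of x j "record_map x j"] by auto

lemma record_map_sh: "record_map (sh x a) j = record_map x (j + a) - a"
proof -
  have *: "(\<Sum>l\<in>{j..<n}. sh x a l) = (\<Sum>l\<in>{j+a..<n+a}. x l)" for n
    by (simp add: sum_shift_int sh_def)
  let ?v = "record_map x (j + a)"
  have "record_map x (j + a) = ?v" by simp
  then have c: "(?v = j + a \<and> (\<forall>n>j+a. (\<Sum>l\<in>{j+a..<n}. x l) < 0)) \<or>
     (j + a < ?v \<and> (\<Sum>l\<in>{j+a..<?v}. x l) \<ge> 0 \<and> (\<forall>n. j + a < n \<and> n < ?v \<longrightarrow> (\<Sum>l\<in>{j+a..<n}. x l) < 0))"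
    by (simp only: record_map_char)
  show ?thesis
    unfolding record_map_char[of "sh x a" j "?v - a"] *
  proof (rule disjE[OF c])
    assume h: "?v = j + a \<and> (\<forall>n>j+a. (\<Sum>l\<in>{j+a..<n}. x l) < 0)"
    show "?v - a = j \<and> (\<forall>n>j. (\<Sum>l\<in>{j + a..<n + a}. x l) < 0) \<or>
    j < ?v - a \<and> 0 \<le> (\<Sum>l\<in>{j + a..<?v - a + a}. x l) \<and> (\<forall>n. j < n \<and> n < ?v - a \<longrightarrow> (\<Sum>l\<in>{j + a..<n + a}. x l) < 0)"
      using h by auto
  next
    assume h: "j + a < ?v \<and> (\<Sum>l\<in>{j+a..<?v}. x l) \<ge> 0 \<and> (\<forall>n. j + a < n \<and> n < ?v \<longrightarrow> (\<Sum>l\<in>{j+a..<n}. x l) < 0)"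
    show "?v - a = j \<and> (\<forall>n>j. (\<Sum>l\<in>{j + a..<n + a}. x l) < 0) \<or>
    j < ?v - a \<and> 0 \<le> (\<Sum>l\<in>{j + a..<?v - a + a}. x l) \<and> (\<forall>n. j < n \<and> n < ?v - a \<longrightarrow> (\<Sum>l\<in>{j + a..<n + a}. x l) < 0)"
      using h by auto
  qed
qed


section \<open>Descendant labels\<close>

lemma funpow_record_map_ge: "(record_map x ^^ n) i \<ge> i"
proof (induction n arbitrary: i)
  case 0 then show ?case by simp
next
  case (Suc n)
  have "(record_map x ^^ Suc n) i = (record_map x ^^ n) (record_map x i)"
    by (simp add: funpow_Suc_right del: funpow.simps)
  also have "\<dots> \<ge> record_map x i" by (rule Suc.IH)
  finally show ?case using record_map_ge[where x=x and j=i] by simp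
qed

lemma desc0_rchildren:
  assumes "v \<in> desc0 x"
  shows "rchildren x v = {j. record_map x j \<noteq> j \<and> record_map x j = v}"
proof -
  have "j \<in> desc0 x" if j: "record_map x j \<noteq> j" "record_map x j = v" for j
  proof (cases "v = 0")
    case True
    then have "j \<noteq> 0" using j by auto
    moreover have "(record_map x ^^ 1) j = 0" using j True by simp
    ultimately show ?thesis unfolding desc0_def by blast
  next
    case False
    then obtain n where n: "n \<ge> 1" "(record_map x ^^ n) v = 0" using assms unfolding desc0_def by auto
    have "(record_map x ^^ Suc n) j = (record_map x ^^ n) (record_map x j)"
      by (simp add: funpow_Suc_right del: funpow.simps)
    then have A: "(record_map x ^^ Suc n) j = 0" using n j by simp
    have "j \<noteq> 0"
    proof
      assume "j = 0"
      then have "v > 0" using record_map_ge[where x=x and j=j] j False by auto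
      then show False using funpow_record_map_ge[where x=x and n=n and i=v] n by simp
    qed
    then show ?thesis using A unfolding desc0_def by auto
  qed
  then show ?thesis unfolding rchildren_def by auto
qed

lemma zero_desc0[simp]: "0 \<in> desc0 x" by (simp add: desc0_def)

lemma desc_label_desc0: "desc_label x u v \<Longrightarrow> v \<in> desc0 x"
  by (induction rule: desc_label.induct) (auto simp: rchildren_def)

lemma desc_label_Nil: "desc_label x [] v \<longleftrightarrow> v = 0"
  by (auto elim: desc_label.cases intro: desc_label.root)

lemma desc_label_snoc:
  "desc_label x (u @ [k]) j \<longleftrightarrow>
    (\<exists>v. desc_label x u v \<and> j \<in> rchildren x v \<and> finite {j' \<in> rchildren x v. j' < j} \<and>
         k = card {j' \<in> rchildren x v. j' < j})"
  by (auto elim: desc_label.cases intro: desc_label.child)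

lemma card_less_unique:
  fixes j1 j2 :: int
  assumes "j1 \<in> A" "j2 \<in> A" "finite {j' \<in> A. j' < j1}" "finite {j' \<in> A. j' < j2}"
    "card {j' \<in> A. j' < j1} = card {j' \<in> A. j' < j2}"
  shows "j1 = j2"
proof (rule ccontr)
  assume "j1 \<noteq> j2"
  then consider "j1 < j2" | "j2 < j1" by linarith
  then show False
  proof cases
    case 1
    then have "{j' \<in> A. j' < j1} \<subset> {j' \<in> A. j' < j2}" using assms by auto
    then have "card {j' \<in> A. j' < j1} < card {j' \<in> A. j' < j2}" using psubset_card_mono[OF assms(4)] by blast
    then show False using assms(5) by simp
  next
    case 2
    then have "{j' \<in> A. j' < j2} \<subset> {j' \<in> A. j' < j1}" using assms by auto
    then have "card {j' \<in> A. j' < j2} < card {j' \<in> A. j' < j1}" using psubset_card_mono[OF assms(3)] by blast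
    then show False using assms(5) by simp
  qed
qed

lemma desc_label_unique: "desc_label x u v \<Longrightarrow> desc_label x u v' \<Longrightarrow> v = v'"
proof (induction u arbitrary: v v' rule: rev_induct)
  case Nil then show ?case by (simp add: desc_label_Nil)
next
  case (snoc k u)
  from snoc.prems obtain p where p: "desc_label x u p" "v \<in> rchildren x p"
    "finite {j' \<in> rchildren x p. j' < v}" "k = card {j' \<in> rchildren x p. j' < v}"
    unfolding desc_label_snoc by blast
  from snoc.prems obtain p' where p': "desc_label x u p'" "v' \<in> rchildren x p'"
    "finite {j' \<in> rchildren x p'. j' < v'}" "k = card {j' \<in> rchildren x p'. j' < v'}"
    unfolding desc_label_snoc by blast
  have "p = p'" using snoc.IH p p' by blast
  then show ?case using card_less_unique[of v "rchildren x p" v'] p p' by simp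
qed

lemma rchildren_sh:
  assumes "v \<in> desc0 x" "v - a \<in> desc0 (sh x a)"
  shows "rchildren (sh x a) (v - a) = (\<lambda>j. j - a) ` rchildren x v"
proof -
  have "rchildren (sh x a) (v - a) = {j. record_map x (j + a) \<noteq> j + a \<and> record_map x (j + a) = v}"
    unfolding desc0_rchildren[OF assms(2)] record_map_sh by auto
  also have "\<dots> = (\<lambda>j. j - a) ` {j. record_map x j \<noteq> j \<and> record_map x j = v}"
  proof (intro set_eqI iffI)
    fix j assume "j \<in> {j. record_map x (j + a) \<noteq> j + a \<and> record_map x (j + a) = v}"
    then show "j \<in> (\<lambda>j. j - a) ` {j. record_map x j \<noteq> j \<and> record_map x j = v}"
      by (intro image_eqI[of _ _ "j + a"]) auto
  next
    fix j assume "j \<in> (\<lambda>j. j - a) ` {j. record_map x j \<noteq> j \<and> record_map x j = v}"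
    then show "j \<in> {j. record_map x (j + a) \<noteq> j + a \<and> record_map x (j + a) = v}" by auto
  qed
  finally show ?thesis unfolding desc0_rchildren[OF assms(1)] .
qed

lemma less_set_sh:
  "{j' \<in> (\<lambda>j. j - a) ` A. j' < j - a} = (\<lambda>j. j - a) ` {j' \<in> (A::int set). j' < j}"
  by auto

lemma desc_label_sub:
  assumes "desc_label x u v"
  shows "desc_label x (u @ w) j \<longleftrightarrow> desc_label (sh x v) w (j - v)"
proof (induction w arbitrary: j rule: rev_induct)
  case Nil
  have 1: "desc_label (sh x v) [] (j - v) \<longleftrightarrow> j = v" by (simp add: desc_label_Nil)
  have 2: "desc_label x u j \<longleftrightarrow> j = v" using desc_label_unique[OF assms] assms by blast
  show ?case by (simp only: append_Nil2 1 2)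
next
  case (snoc k w)
  have inj: "inj_on (\<lambda>j. j - v) A" for A :: "int set" by (auto simp: inj_on_def)
  have "desc_label x (u @ w @ [k]) j \<longleftrightarrow>
    (\<exists>v'. desc_label x (u @ w) v' \<and> j \<in> rchildren x v' \<and> finite {j' \<in> rchildren x v'. j' < j} \<and>
         k = card {j' \<in> rchildren x v'. j' < j})"
    using desc_label_snoc[of x "u @ w" k j] by simp
  also have "\<dots> \<longleftrightarrow>
    (\<exists>v'. desc_label (sh x v) w (v' - v) \<and> j - v \<in> rchildren (sh x v) (v' - v) \<and>
        finite {j' \<in> rchildren (sh x v) (v' - v). j' < j - v} \<and>
         k = card {j' \<in> rchildren (sh x v) (v' - v). j' < j - v})"
  proof (intro ex_cong1 iffI)
    fix v'
    assume h: "desc_label x (u @ w) v' \<and> j \<in> rchildren x v' \<and> finite {j' \<in> rchildren x v'. j' < j} \<and>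
         k = card {j' \<in> rchildren x v'. j' < j}"
    then have d: "desc_label (sh x v) w (v' - v)" using snoc.IH by blast
    have e: "rchildren (sh x v) (v' - v) = (\<lambda>j. j - v) ` rchildren x v'"
      using rchildren_sh[OF desc_label_desc0 desc_label_desc0[OF d]] h by blast
    show "desc_label (sh x v) w (v' - v) \<and> j - v \<in> rchildren (sh x v) (v' - v) \<and>
        finite {j' \<in> rchildren (sh x v) (v' - v). j' < j - v} \<and>
         k = card {j' \<in> rchildren (sh x v) (v' - v). j' < j - v}"
      using d h unfolding e less_set_sh by (auto simp: card_image[OF inj])
  next
    fix v'
    assume h: "desc_label (sh x v) w (v' - v) \<and> j - v \<in> rchildren (sh x v) (v' - v) \<and>
        finite {j' \<in> rchildren (sh x v) (v' - v). j' < j - v} \<and>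
         k = card {j' \<in> rchildren (sh x v) (v' - v). j' < j - v}"
    then have d: "desc_label x (u @ w) v'" using snoc.IH by blast
    have e: "rchildren (sh x v) (v' - v) = (\<lambda>j. j - v) ` rchildren x v'"
      using rchildren_sh[OF desc_label_desc0[OF d] desc_label_desc0] h by blast
    have f: "finite {j' \<in> rchildren x v'. j' < j}"
      using h unfolding e less_set_sh using finite_image_iff[OF inj] by blast
    show "desc_label x (u @ w) v' \<and> j \<in> rchildren x v' \<and> finite {j' \<in> rchildren x v'. j' < j} \<and>
         k = card {j' \<in> rchildren x v'. j' < j}"
      using d h f unfolding e less_set_sh by (auto simp: card_image[OF inj])
  qed
  also have "\<dots> \<longleftrightarrow> (\<exists>v''. desc_label (sh x v) w v'' \<and> j - v \<in> rchildren (sh x v) v'' \<and>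
        finite {j' \<in> rchildren (sh x v) v''. j' < j - v} \<and>
         k = card {j' \<in> rchildren (sh x v) v''. j' < j - v})"
    apply (rule iffI)
     apply blast
    apply (erule exE)
    subgoal for v'' by (rule exI[of _ "v'' + v"]) simp
    done
  also have "\<dots> \<longleftrightarrow> desc_label (sh x v) (w @ [k]) (j - v)"
    by (simp only: desc_label_snoc)
  finally show ?case by (simp only: append_assoc)
qed

lemma desc_label_prefix: "desc_label x (u @ w) j \<Longrightarrow> \<exists>v. desc_label x u v"
proof (induction w arbitrary: j rule: rev_induct)
  case Nil then show ?case by auto
next
  case (snoc k w)
  then show ?case using desc_label_snoc[of x "u @ w" k j] by auto
qed

lemma desc_tree_Nil[simp]: "[] \<in> desc_tree x"
  by (auto simp: desc_tree_def intro: desc_label.root)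

lemma desc_tree_Cons:
  "k # w \<in> desc_tree x \<longleftrightarrow> (\<exists>c. desc_label x [k] c \<and> w \<in> desc_tree (sh x c))"
proof
  assume "k # w \<in> desc_tree x"
  then obtain j where j: "desc_label x ([k] @ w) j" by (auto simp: desc_tree_def)
  then obtain c where c: "desc_label x [k] c" using desc_label_prefix by blast
  then have "desc_label (sh x c) w (j - c)" using desc_label_sub[OF c] j by blast
  then show "\<exists>c. desc_label x [k] c \<and> w \<in> desc_tree (sh x c)" using c by (auto simp: desc_tree_def)
next
  assume "\<exists>c. desc_label x [k] c \<and> w \<in> desc_tree (sh x c)"
  then obtain c j where c: "desc_label x [k] c" "desc_label (sh x c) w j" by (auto simp: desc_tree_def)
  then have "desc_label x ([k] @ w) (j + c)" using desc_label_sub[OF c(1), of w "j + c"] by simp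
  then show "k # w \<in> desc_tree x" by (auto simp: desc_tree_def)
qed

lemma rch0_iff:
  "j \<in> rchildren x 0 \<longleftrightarrow> j < 0 \<and> V x j \<ge> 0 \<and> (\<forall>n. j < n \<and> n < 0 \<longrightarrow> V x n > V x j)"
proof -
  have "j \<in> rchildren x 0 \<longleftrightarrow> record_map x j \<noteq> j \<and> record_map x j = 0"
    using desc0_rchildren[OF zero_desc0, of x] by auto
  also have "\<dots> \<longleftrightarrow> j < 0 \<and> (\<Sum>l\<in>{j..<0}. x l) \<ge> 0 \<and> (\<forall>n. j < n \<and> n < 0 \<longrightarrow> (\<Sum>l\<in>{j..<n}. x l) < 0)"
  proof
    assume a: "record_map x j \<noteq> j \<and> record_map x j = 0"
    then have "record_map x j = 0" by simp
    then have "(0 = j \<and> (\<forall>n>j. (\<Sum>l\<in>{j..<n}. x l) < 0)) \<or>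
     (j < 0 \<and> (\<Sum>l\<in>{j..<0}. x l) \<ge> 0 \<and> (\<forall>n. j < n \<and> n < 0 \<longrightarrow> (\<Sum>l\<in>{j..<n}. x l) < 0))"
      by (simp only: record_map_char)
    moreover have "j \<noteq> 0" using a by auto
    ultimately show "j < 0 \<and> (\<Sum>l\<in>{j..<0}. x l) \<ge> 0 \<and> (\<forall>n. j < n \<and> n < 0 \<longrightarrow> (\<Sum>l\<in>{j..<n}. x l) < 0)"
      by blast
  next
    assume a: "j < 0 \<and> (\<Sum>l\<in>{j..<0}. x l) \<ge> 0 \<and> (\<forall>n. j < n \<and> n < 0 \<longrightarrow> (\<Sum>l\<in>{j..<n}. x l) < 0)"
    then have "record_map x j = 0" by (simp only: record_map_char) blast
    then show "record_map x j \<noteq> j \<and> record_map x j = 0" using a by auto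
  qed
  also have "\<dots> \<longleftrightarrow> j < 0 \<and> V x j \<ge> 0 \<and> (\<forall>n. j < n \<and> n < 0 \<longrightarrow> V x n > V x j)"
  proof -
    have e1: "(\<Sum>l\<in>{j..<0}. x l) = V x j" by (simp add: V_def)
    have e2: "\<And>n. j < n \<Longrightarrow> n < 0 \<Longrightarrow> (\<Sum>l\<in>{j..<n}. x l) = V x j - V x n"
      using sum_V[of j _ x] by simp
    show ?thesis unfolding e1 using e2 by auto
  qed
  finally show ?thesis .
qed

fun chain :: "(int \<Rightarrow> int) \<Rightarrow> int \<Rightarrow> nat \<Rightarrow> int" where
  "chain x a 0 = a"
| "chain x a (Suc r) = chain x a r - int (hit x (chain x a r))"

lemma chain_front: "chain x a (Suc r) = chain x (a - int (hit x a)) r"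
  by (induction r) auto

lemma chain_sh: "chain (sh x b) a r = chain x (a + b) r - b"
  by (induction r) (auto simp: hit_sh)

lemma chain_inv:
  assumes "lbx x" "x (-1) = int K - 1" "r \<le> K" "\<forall>r'<r. hashit x (chain x (-1) r')"
  shows "V x (chain x (-1) r) = int K - 1 - int r \<and>
    (\<forall>p. chain x (-1) r < p \<and> p < 0 \<longrightarrow> V x p \<ge> int K - int r) \<and> chain x (-1) r \<le> -1"
  using assms(3,4)
proof (induction r)
  case 0
  show ?case using assms(2) by (auto simp: V_m1)
next
  case (Suc r)
  define c where "c = chain x (-1) r"
  define h where "h = hit x c"
  have IH: "V x c = int K - 1 - int r" "\<And>p. c < p \<Longrightarrow> p < 0 \<Longrightarrow> V x p \<ge> int K - int r" "c \<le> -1"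
    using Suc unfolding c_def by auto
  have hc: "hashit x c" using Suc.prems unfolding c_def by auto
  note hp = hit_props[OF hc assms(1), folded h_def]
  have cs: "chain x (-1) (Suc r) = c - int h" unfolding c_def h_def by simp
  have Vc: "V x (c - int h) = int K - 1 - int (Suc r)"
    using hp(1) V_Sw[of c x h] IH(1,3) by simp
  have "V x p \<ge> int K - int (Suc r)" if p: "c - int h < p" "p < 0" for p
  proof (cases "c < p")
    case True then show ?thesis using IH(2)[OF True p(2)] by simp
  next
    case False
    define m where "m = nat (c - p)"
    have m: "m < h" "p = c - int m" using p False unfolding m_def by auto
    have "Sw x c m \<ge> 0" using hp(3)[OF m(1)] .
    then show ?thesis using V_Sw[of c x m] IH(1,3) m(2) by simp
  qed
  then show ?case using cs Vc IH(3) by auto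
qed

lemma chain_hashit:
  assumes "lbx x" "hashit x 0" "x (-1) = int K - 1"
  shows "r < K \<Longrightarrow> hashit x (chain x (-1) r)"
proof (induction r rule: less_induct)
  case (less r)
  define c where "c = chain x (-1) r"
  have inv: "V x c = int K - 1 - int r" "\<And>p. c < p \<Longrightarrow> p < 0 \<Longrightarrow> V x p \<ge> int K - int r" "c \<le> -1"
    using chain_inv[OF assms(1,3), of r] less unfolding c_def by auto
  obtain m where m: "Sw x 0 m < 0" using assms(2) unfolding hashit_def by auto
  have Vm: "V x (- int m) < 0" using m V_Sw[of 0 x m] by simp
  have "- int m < c"
  proof (rule ccontr)
    assume "\<not> - int m < c"
    then consider "- int m = c" | "c < - int m" "- int m < 0" | "m = 0" by linarith
    then show False
    proof cases
      case 1 then show False using Vm inv(1) less.prems by simp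
    next
      case 2 then show False using Vm inv(2)[OF 2] less.prems by simp
    next
      case 3 then show False using Vm by simp
    qed
  qed
  then have "Sw x c (nat (c + int m)) < 0"
    using V_Sw[of c x "nat (c + int m)"] inv(1,3) Vm less.prems by simp
  then show ?case unfolding c_def hashit_def by blast
qed

lemma K_def_lemma: "lbx x \<Longrightarrow> x (-1) = int (nat (x (-1) + 1)) - 1"
proof -
  assume "lbx x"
  then have "x (-1) \<ge> -1" by (simp add: lbx_def)
  then show ?thesis by simp
qed

lemma hashit0_iff:
  assumes "lbx x"
  shows "hashit x 0 \<longleftrightarrow> (\<forall>r < nat (x (-1) + 1). hashit x (chain x (-1) r))"
proof
  assume "hashit x 0"
  then show "\<forall>r < nat (x (-1) + 1). hashit x (chain x (-1) r)"
    using chain_hashit[OF assms _ K_def_lemma[OF assms]] by blast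
next
  assume h: "\<forall>r < nat (x (-1) + 1). hashit x (chain x (-1) r)"
  define K where "K = nat (x (-1) + 1)"
  have xK: "x (-1) = int K - 1" using K_def_lemma[OF assms] unfolding K_def .
  have h': "\<forall>r'<K. hashit x (chain x (-1) r')" using h unfolding K_def .
  have inv: "V x (chain x (-1) K) = int K - 1 - int K" "chain x (-1) K \<le> -1"
    using chain_inv[OF assms xK order.refl h'] by blast+
  have "Sw x 0 (nat (- chain x (-1) K)) = V x (chain x (-1) K)"
    using V_Sw[of 0 x "nat (- chain x (-1) K)"] inv(2) by simp
  then have "Sw x 0 (nat (- chain x (-1) K)) < 0" using inv(1) by simp
  then show "hashit x 0" unfolding hashit_def by blast
qed

lemma hit0_chain:
  assumes "lbx x" "hashit x 0"
  shows "hit x 0 = nat (- chain x (-1) (nat (x (-1) + 1)))"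
proof -
  define K where "K = nat (x (-1) + 1)"
  have xK: "x (-1) = int K - 1" using K_def_lemma[OF assms(1)] unfolding K_def .
  have h: "\<forall>r<K. hashit x (chain x (-1) r)" using chain_hashit[OF assms xK] by blast
  have inv: "V x (chain x (-1) K) = int K - 1 - int K" 
     "\<And>p. chain x (-1) K < p \<Longrightarrow> p < 0 \<Longrightarrow> V x p \<ge> int K - int K"
     "chain x (-1) K \<le> -1"
    using chain_inv[OF assms(1) xK order.refl h] by blast+
  have "hit x 0 = nat (- chain x (-1) K)"
  proof (rule hit_unique(2))
    have "Sw x 0 (nat (- chain x (-1) K)) = V x (chain x (-1) K)"
      using V_Sw[of 0 x "nat (- chain x (-1) K)"] inv(3) by simp
    then show "Sw x 0 (nat (- chain x (-1) K)) < 0" using inv(1) by simp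
    fix m assume m: "m < nat (- chain x (-1) K)"
    show "Sw x 0 m \<ge> 0"
    proof (cases "m = 0")
      case True then show ?thesis by simp
    next
      case False
      have "chain x (-1) K < - int m" "- int m < 0" using m False by auto
      then have "V x (- int m) \<ge> 0" using inv(2) by simp
      then show ?thesis using V_Sw[of 0 x m] by simp
    qed
  qed
  then show ?thesis unfolding K_def .
qed

lemma chain_mono:
  assumes "lbx x" "hashit x 0" "x (-1) = int K - 1"
  shows "r < r' \<Longrightarrow> r' \<le> K \<Longrightarrow> chain x (-1) r' < chain x (-1) r"
proof (induction r')
  case 0 then show ?case by simp
next
  case (Suc r')
  have "hashit x (chain x (-1) r')" using chain_hashit[OF assms] Suc.prems by simp
  then have "hit x (chain x (-1) r') > 0" using hit_props(2) assms(1) by blast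
  then have "chain x (-1) (Suc r') < chain x (-1) r'" by simp
  then show ?case using Suc by (cases "r = r'") auto
qed

lemma rch0_eq:
  assumes "lbx x" "hashit x 0" "x (-1) = int K - 1"
  shows "rchildren x 0 = chain x (-1) ` {..<K}"
proof
  have h: "\<forall>r<K. hashit x (chain x (-1) r)" using chain_hashit[OF assms] by blast
  show "chain x (-1) ` {..<K} \<subseteq> rchildren x 0"
  proof
    fix j assume "j \<in> chain x (-1) ` {..<K}"
    then obtain r where r: "r < K" "j = chain x (-1) r" by auto
    have inv: "V x j = int K - 1 - int r" "\<And>p. j < p \<Longrightarrow> p < 0 \<Longrightarrow> V x p \<ge> int K - int r" "j \<le> -1"
      using chain_inv[OF assms(1,3), of r] h r by auto
    show "j \<in> rchildren x 0" unfolding rch0_iff using inv r(1) by force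
  qed
  show "rchildren x 0 \<subseteq> chain x (-1) ` {..<K}"
  proof
    fix j assume "j \<in> rchildren x 0"
    then have j: "j < 0" "V x j \<ge> 0" "\<And>n. j < n \<Longrightarrow> n < 0 \<Longrightarrow> V x n > V x j"
      unfolding rch0_iff by auto
    have invK: "V x (chain x (-1) K) = -1" "chain x (-1) K \<le> -1"
      using chain_inv[OF assms(1,3), of K] h by auto
    have cK: "chain x (-1) K < j"
    proof (rule ccontr)
      assume "\<not> chain x (-1) K < j"
      then consider "j = chain x (-1) K" | "j < chain x (-1) K" by linarith
      then show False
      proof cases
        case 1 then show False using j invK by simp
      next
        case 2 then show False using j(2) j(3)[OF 2] invK by simp
      qed
    qed
    have Kpos: "K > 0"
    proof (rule ccontr)
      assume "\<not> K > 0"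
      then have "K = 0" by simp
      then show False using cK j(1) by simp
    qed
    have ex: "\<exists>r. chain x (-1) (Suc r) < j"
      using cK Kpos by (intro exI[of _ "K - 1"]) simp
    define r0 where "r0 = (LEAST r. chain x (-1) (Suc r) < j)"
    have r0: "chain x (-1) (Suc r0) < j" unfolding r0_def by (rule LeastI_ex[OF ex])
    have r0K: "r0 < K"
    proof (rule ccontr)
      assume "\<not> r0 < K"
      then have "K - 1 < r0" using Kpos by simp
      then have "\<not> chain x (-1) (Suc (K - 1)) < j" unfolding r0_def by (rule not_less_Least)
      then show False using cK Kpos by simp
    qed
    have jle: "j \<le> chain x (-1) r0"
    proof (cases r0)
      case 0 then show ?thesis using j(1) by simp
    next
      case (Suc r1)
      then have "r1 < r0" by simp
      then have "\<not> chain x (-1) (Suc r1) < j" unfolding r0_def by (rule not_less_Least)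
      then show ?thesis using Suc by simp
    qed
    have inv1: "\<And>p. chain x (-1) (Suc r0) < p \<Longrightarrow> p < 0 \<Longrightarrow> V x p \<ge> int K - int (Suc r0)"
      using chain_inv[OF assms(1,3), of "Suc r0"] h r0K by auto
    have inv0: "V x (chain x (-1) r0) = int K - 1 - int r0" "chain x (-1) r0 \<le> -1"
      using chain_inv[OF assms(1,3), of r0] h r0K by auto
    have "j = chain x (-1) r0"
    proof (rule ccontr)
      assume "j \<noteq> chain x (-1) r0"
      then have lt: "j < chain x (-1) r0" using jle by simp
      have "V x j \<ge> int K - int (Suc r0)" using inv1[OF r0 j(1)] .
      moreover have "V x (chain x (-1) r0) > V x j" using j(3)[OF lt] inv0 by simp
      ultimately show False using inv0(1) by simp
    qed
    then show "j \<in> chain x (-1) ` {..<K}" using r0K by auto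
  qed
qed

lemma desc_label_single:
  assumes "lbx x" "hashit x 0" "x (-1) = int K - 1"
  shows "desc_label x [k] c \<longleftrightarrow> k < K \<and> c = chain x (-1) (K - 1 - k)"
proof -
  have mono: "\<And>r r'. r < r' \<Longrightarrow> r' \<le> K \<Longrightarrow> chain x (-1) r' < chain x (-1) r"
    using chain_mono[OF assms] by blast
  have inj: "inj_on (chain x (-1)) {..K}"
    by (rule inj_onI) (metis atMost_iff less_irrefl mono nat_neq_iff)
  have less_set: "{j' \<in> rchildren x 0. j' < chain x (-1) r} = chain x (-1) ` {r<..<K}" if "r < K" for r
  proof -
    have "{j' \<in> chain x (-1) ` {..<K}. j' < chain x (-1) r} = chain x (-1) ` {r<..<K}"
    proof (intro set_eqI iffI)
      fix j assume "j \<in> {j' \<in> chain x (-1) ` {..<K}. j' < chain x (-1) r}"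
      then obtain r' where r': "r' < K" "j = chain x (-1) r'" "chain x (-1) r' < chain x (-1) r" by auto
      have "r < r'"
      proof (rule ccontr)
        assume "\<not> r < r'"
        then consider "r = r'" | "r' < r" by linarith
        then show False using r' mono[of r' r] that by cases auto
      qed
      then show "j \<in> chain x (-1) ` {r<..<K}" using r' by auto
    next
      fix j assume "j \<in> chain x (-1) ` {r<..<K}"
      then show "j \<in> {j' \<in> chain x (-1) ` {..<K}. j' < chain x (-1) r}" using mono by auto
    qed
    then show ?thesis using rch0_eq[OF assms] by simp
  qed
  have card: "card (chain x (-1) ` {r<..<K}) = K - 1 - r" if "r < K" for r
  proof -
    have "inj_on (chain x (-1)) {r<..<K}" using inj by (rule inj_on_subset) auto
    then show ?thesis by (simp add: card_image)
  qed
  have "desc_label x [k] c \<longleftrightarrow> c \<in> rchildren x 0 \<and> finite {j' \<in> rchildren x 0. j' < c} \<and>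
         k = card {j' \<in> rchildren x 0. j' < c}"
    using desc_label_snoc[of x "[]" k c] by (simp add: desc_label_Nil)
  also have "\<dots> \<longleftrightarrow> (\<exists>r<K. c = chain x (-1) r \<and> k = K - 1 - r)"
  proof
    assume "c \<in> rchildren x 0 \<and> finite {j' \<in> rchildren x 0. j' < c} \<and> k = card {j' \<in> rchildren x 0. j' < c}"
    then obtain r where "r < K" "c = chain x (-1) r" "k = card {j' \<in> rchildren x 0. j' < c}"
      using rch0_eq[OF assms] by auto
    then show "\<exists>r<K. c = chain x (-1) r \<and> k = K - 1 - r" using less_set card by auto
  next
    assume "\<exists>r<K. c = chain x (-1) r \<and> k = K - 1 - r"
    then obtain r where "r < K" "c = chain x (-1) r" "k = K - 1 - r" by auto
    then show "c \<in> rchildren x 0 \<and> finite {j' \<in> rchildren x 0. j' < c} \<and> k = card {j' \<in> rchildren x 0. j' < c}"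
      using less_set card rch0_eq[OF assms] by auto
  qed
  also have "\<dots> \<longleftrightarrow> k < K \<and> c = chain x (-1) (K - 1 - k)"
  proof
    assume "\<exists>r<K. c = chain x (-1) r \<and> k = K - 1 - r"
    then obtain r where "r < K" "c = chain x (-1) r" "k = K - 1 - r" by auto
    moreover have "K - 1 - (K - 1 - r) = r" using \<open>r < K\<close> by simp
    ultimately show "k < K \<and> c = chain x (-1) (K - 1 - k)" by auto
  next
    assume "k < K \<and> c = chain x (-1) (K - 1 - k)"
    then show "\<exists>r<K. c = chain x (-1) r \<and> k = K - 1 - r"
      by (intro exI[of _ "K - 1 - k"]) auto
  qed
  finally show ?thesis .
qed

lemma trunc_Suc:
  assumes "lbx x" "hashit x 0" "x (-1) = int K - 1"
  shows "trunc (desc_tree x) (Suc n) =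
    insert [] {k # w | k w. k < K \<and> w \<in> trunc (desc_tree (sh x (chain x (-1) (K - 1 - k)))) n}"
proof (intro set_eqI)
  fix u
  show "u \<in> trunc (desc_tree x) (Suc n) \<longleftrightarrow>
    u \<in> insert [] {k # w | k w. k < K \<and> w \<in> trunc (desc_tree (sh x (chain x (-1) (K - 1 - k)))) n}"
  proof (cases u)
    case Nil then show ?thesis by (simp add: trunc_def)
  next
    case (Cons k w)
    then show ?thesis
      unfolding trunc_def using desc_tree_Cons[of k w x] desc_label_single[OF assms, of k] by auto
  qed
qed

lemma trunc_0: "trunc (desc_tree x) 0 = {[]}"
  by (auto simp: trunc_def)

section \<open>Plane tree decomposition\<close>

definition sub :: "nat list set \<Rightarrow> nat \<Rightarrow> nat list set" where
  "sub t k = {w. k # w \<in> t}"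

lemma plane_prefix: "plane_tree t \<Longrightarrow> u @ w \<in> t \<Longrightarrow> u \<in> t"
proof (induction w rule: rev_induct)
  case Nil then show ?case by simp
next
  case (snoc k w)
  then show ?case unfolding plane_tree_def by (metis append_assoc)
qed

lemma finite_down_closed:
  fixes A :: "nat set"
  assumes "finite A" "\<And>k k'. k \<in> A \<Longrightarrow> k' < k \<Longrightarrow> k' \<in> A"
  shows "A = {..<card A}"
proof (cases "A = {}")
  case True then show ?thesis by simp
next
  case False
  define m where "m = Max A"
  have mA: "m \<in> A" using assms(1) False unfolding m_def by simp
  have "A = {..m}"
  proof
    show "A \<subseteq> {..m}" using Max_ge[OF assms(1)] unfolding m_def by auto
    show "{..m} \<subseteq> A" using mA assms(2) by (auto simp: le_less)
  qed
  then show ?thesis by (simp add: lessThan_Suc_atMost)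
qed

lemma plane_children:
  assumes "plane_tree t" "finite t"
  shows "{k. [k] \<in> t} = {..<nchild t []}"
proof -
  have "finite {k. [k] \<in> t}"
  proof -
    have "{k. [k] \<in> t} \<subseteq> (\<lambda>u. hd u) ` t" by (auto intro: image_eqI[of _ _ "[_]"])
    then show ?thesis using assms(2) finite_surj by blast
  qed
  moreover have "\<And>k k'. k \<in> {k. [k] \<in> t} \<Longrightarrow> k' < k \<Longrightarrow> k' \<in> {k. [k] \<in> t}"
    using assms(1) unfolding plane_tree_def by (metis append_Nil mem_Collect_eq)
  ultimately have "{k. [k] \<in> t} = {..<card {k. [k] \<in> t}}" by (rule finite_down_closed)
  then show ?thesis by (simp add: nchild_def)
qed

lemma plane_decomp:
  assumes "plane_tree t" "finite t"
  shows "t = insert [] {k # w | k w. k < nchild t [] \<and> w \<in> sub t k}"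
proof (intro set_eqI iffI)
  fix u assume u: "u \<in> t"
  show "u \<in> insert [] {k # w | k w. k < nchild t [] \<and> w \<in> sub t k}"
  proof (cases u)
    case Nil then show ?thesis by simp
  next
    case (Cons k w)
    then have "[k] \<in> t" using plane_prefix[OF assms(1), of "[k]" w] u by simp
    then have "k < nchild t []" using plane_children[OF assms] by auto
    then show ?thesis using Cons u by (auto simp: sub_def)
  qed
next
  fix u assume "u \<in> insert [] {k # w | k w. k < nchild t [] \<and> w \<in> sub t k}"
  then show "u \<in> t" using assms(1) by (auto simp: sub_def plane_tree_def)
qed

lemma sub_plane:
  assumes "plane_tree t" "finite t" "k < nchild t []" "\<forall>u\<in>t. length u \<le> Suc n"
  shows "plane_tree (sub t k)" "finite (sub t k)" "\<forall>u\<in>sub t k. length u \<le> n"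
proof -
  have "[k] \<in> t" using plane_children[OF assms(1,2)] assms(3) by auto
  have ax: "\<And>u j. u @ [j] \<in> t \<Longrightarrow> u \<in> t" "\<And>u j j'. u @ [j] \<in> t \<Longrightarrow> j' < j \<Longrightarrow> u @ [j'] \<in> t"
    using assms(1) unfolding plane_tree_def by blast+
  have 1: "[] \<in> sub t k" using \<open>[k] \<in> t\<close> by (simp add: sub_def)
  have 2: "\<forall>u j. u @ [j] \<in> sub t k \<longrightarrow> u \<in> sub t k"
  proof (intro allI impI)
    fix u j assume "u @ [j] \<in> sub t k"
    then have "(k # u) @ [j] \<in> t" by (simp add: sub_def)
    then have "k # u \<in> t" by (rule ax(1))
    then show "u \<in> sub t k" by (simp add: sub_def)
  qed
  have 3: "\<forall>u j j'. u @ [j] \<in> sub t k \<longrightarrow> j' < j \<longrightarrow> u @ [j'] \<in> sub t k"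
  proof (intro allI impI)
    fix u j j' assume "u @ [j] \<in> sub t k" "j' < j"
    then have "(k # u) @ [j] \<in> t" by (simp add: sub_def)
    then have "(k # u) @ [j'] \<in> t" using \<open>j' < j\<close> by (rule ax(2))
    then show "u @ [j'] \<in> sub t k" by (simp add: sub_def)
  qed
  show "plane_tree (sub t k)" unfolding plane_tree_def using 1 2 3 by blast
  have "sub t k = tl ` {u \<in> t. u \<noteq> [] \<and> hd u = k}"
    unfolding sub_def by (force intro: image_eqI[of _ _ "k # _"])
  then show "finite (sub t k)" using assms(2) by simp
  show "\<forall>u\<in>sub t k. length u \<le> n" using assms(4) unfolding sub_def by fastforce
qed

definition Pi_t :: "(nat \<Rightarrow> real) \<Rightarrow> nat list set \<Rightarrow> nat \<Rightarrow> real" where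
  "Pi_t \<pi> t n = (\<Prod>u\<in>{u \<in> t. length u < n}. \<pi> (nchild t u))"

lemma Pi_t_Suc:
  assumes "plane_tree t" "finite t"
  shows "Pi_t \<pi> t (Suc n) = \<pi> (nchild t []) * (\<Prod>k<nchild t []. Pi_t \<pi> (sub t k) n)"
proof -
  define K where "K = nchild t []"
  have set: "{u \<in> t. length u < Suc n} = insert [] (\<Union>k<K. (Cons k) ` {w \<in> sub t k. length w < n})"
  proof (intro set_eqI iffI)
    fix u assume u: "u \<in> {u \<in> t. length u < Suc n}"
    show "u \<in> insert [] (\<Union>k<K. (Cons k) ` {w \<in> sub t k. length w < n})"
    proof (cases u)
      case Nil then show ?thesis by simp
    next
      case (Cons k w)
      then have "[k] \<in> t" using plane_prefix[OF assms(1), of "[k]" w] u by simp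
      then have "k < K" using plane_children[OF assms] unfolding K_def by auto
      moreover have "w \<in> {w \<in> sub t k. length w < n}" using u Cons by (simp add: sub_def)
      ultimately show ?thesis using Cons by blast
    qed
  next
    fix u assume "u \<in> insert [] (\<Union>k<K. (Cons k) ` {w \<in> sub t k. length w < n})"
    then show "u \<in> {u \<in> t. length u < Suc n}"
      using assms(1) by (auto simp: sub_def plane_tree_def)
  qed
  have fin: "finite {w \<in> sub t k. length w < n}" for k
  proof -
    have "sub t k = tl ` {u \<in> t. u \<noteq> [] \<and> hd u = k}"
      unfolding sub_def by (force intro: image_eqI[of _ _ "k # _"])
    then show ?thesis using assms(2) by simp
  qed
  have nc: "nchild t (k # w) = nchild (sub t k) w" for k w
    by (simp add: nchild_def sub_def)
  have "Pi_t \<pi> t (Suc n) = \<pi> (nchild t []) * (\<Prod>u\<in>(\<Union>k<K. (Cons k) ` {w \<in> sub t k. length w < n}). \<pi> (nchild t u))"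
    unfolding Pi_t_def set by (subst prod.insert) (auto intro: fin)
  also have "(\<Prod>u\<in>(\<Union>k<K. (Cons k) ` {w \<in> sub t k. length w < n}). \<pi> (nchild t u))
     = (\<Prod>k<K. \<Prod>u\<in>(Cons k) ` {w \<in> sub t k. length w < n}. \<pi> (nchild t u))"
    by (rule prod.UNION_disjoint) (auto intro: fin)
  also have "\<dots> = (\<Prod>k<K. Pi_t \<pi> (sub t k) n)"
    unfolding Pi_t_def
    by (rule prod.cong[OF refl], subst prod.reindex) (auto simp: nc)
  finally show ?thesis unfolding K_def .
qed

section \<open>Forests\<close>

fun Forest :: "nat list set list \<Rightarrow> nat \<Rightarrow> (int \<Rightarrow> int) \<Rightarrow> bool" where
  "Forest [] n y = True"
| "Forest (s # ss) n y = (hashit y 0 \<and> trunc (desc_tree y) n = s \<and> Forest ss n (sh y (- int (hit y 0))))"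

lemma all_less_Suc_split: "(\<forall>r<Suc L. P r) \<longleftrightarrow> P 0 \<and> (\<forall>r<L. P (Suc r))"
  using less_Suc_eq_0_disj by auto

lemma Forest_chain:
  "Forest ss n (sh x a) \<longleftrightarrow>
    (\<forall>r<length ss. hashit x (chain x a r) \<and> trunc (desc_tree (sh x (chain x a r))) n = ss ! r)"
proof (induction ss arbitrary: a)
  case Nil then show ?case by simp
next
  case (Cons s ss)
  have "Forest (s # ss) n (sh x a) \<longleftrightarrow>
     hashit x a \<and> trunc (desc_tree (sh x a)) n = s \<and> Forest ss n (sh x (a - int (hit x a)))"
    by (simp add: hashit_sh hit_sh)
  also have "\<dots> \<longleftrightarrow> hashit x a \<and> trunc (desc_tree (sh x a)) n = s \<and>
     (\<forall>r<length ss. hashit x (chain x a (Suc r)) \<and> trunc (desc_tree (sh x (chain x a (Suc r)))) n = ss ! r)"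
    using Cons.IH[of "a - int (hit x a)"] by (simp only: chain_front)
  also have "\<dots> \<longleftrightarrow> (\<forall>r<length (s # ss). hashit x (chain x a r) \<and> trunc (desc_tree (sh x (chain x a r))) n = (s # ss) ! r)"
    by (simp only: length_Cons all_less_Suc_split) simp
  finally show ?case .
qed

lemma rev_upt_nth: "r < K \<Longrightarrow> rev [0..<K] ! r = K - 1 - r"
  by (simp add: rev_nth)

lemma event_decomp:
  assumes lb: "lbx x" and t: "plane_tree t" "finite t" "\<forall>u\<in>t. length u \<le> Suc n"
  defines "K \<equiv> nchild t []"
  shows "(hashit x 0 \<and> trunc (desc_tree x) (Suc n) = t) \<longleftrightarrow>
         (x (-1) = int K - 1 \<and> Forest (map (sub t) (rev [0..<K])) n (sh x (-1)))"
proof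
  assume h: "hashit x 0 \<and> trunc (desc_tree x) (Suc n) = t"
  define K' where "K' = nat (x (-1) + 1)"
  have xK: "x (-1) = int K' - 1" using K_def_lemma[OF lb] unfolding K'_def .
  have tr: "t = insert [] {k # w | k w. k < K' \<and> w \<in> trunc (desc_tree (sh x (chain x (-1) (K' - 1 - k)))) n}"
    using trunc_Suc[OF lb _ xK] h by simp
  have "{k. [k] \<in> t} = {..<K'}" by (subst tr) (auto simp: trunc_def)
  then have KK: "K = K'" using plane_children[OF t(1,2)] unfolding K_def by (metis lessThan_eq_iff)
  have sub: "sub t k = trunc (desc_tree (sh x (chain x (-1) (K' - 1 - k)))) n" if "k < K'" for k
    using that by (subst tr) (auto simp: sub_def)
  have "\<forall>r<K. hashit x (chain x (-1) r) \<and> trunc (desc_tree (sh x (chain x (-1) r))) n = map (sub t) (rev [0..<K]) ! r"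
  proof (intro allI impI conjI)
    fix r assume r: "r < K"
    show "hashit x (chain x (-1) r)" using chain_hashit[OF lb _ xK] h r KK by auto
    have "map (sub t) (rev [0..<K]) ! r = sub t (K - 1 - r)" using r by (simp add: rev_upt_nth)
    also have "\<dots> = trunc (desc_tree (sh x (chain x (-1) r))) n" using sub[of "K - 1 - r"] r KK by simp
    finally show "trunc (desc_tree (sh x (chain x (-1) r))) n = map (sub t) (rev [0..<K]) ! r" by simp
  qed
  then show "x (-1) = int K - 1 \<and> Forest (map (sub t) (rev [0..<K])) n (sh x (-1))"
    using xK KK by (simp add: Forest_chain)
next
  assume h: "x (-1) = int K - 1 \<and> Forest (map (sub t) (rev [0..<K])) n (sh x (-1))"
  then have F: "\<forall>r<K. hashit x (chain x (-1) r) \<and> trunc (desc_tree (sh x (chain x (-1) r))) n = map (sub t) (rev [0..<K]) ! r"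
    by (simp add: Forest_chain)
  have nK: "nat (x (-1) + 1) = K" using h by simp
  have hx: "hashit x 0" using hashit0_iff[OF lb] F nK by simp
  have sub: "trunc (desc_tree (sh x (chain x (-1) (K - 1 - k)))) n = sub t k" if "k < K" for k
  proof -
    have "K - 1 - k < K" using that by simp
    then have "trunc (desc_tree (sh x (chain x (-1) (K - 1 - k)))) n = map (sub t) (rev [0..<K]) ! (K - 1 - k)"
      using F by blast
    also have "\<dots> = sub t k" using that by (simp add: rev_upt_nth)
    finally show ?thesis .
  qed
  have "trunc (desc_tree x) (Suc n) = insert [] {k # w | k w. k < K \<and> w \<in> trunc (desc_tree (sh x (chain x (-1) (K - 1 - k)))) n}"
    using trunc_Suc[OF lb hx] h by simp
  also have "\<dots> = insert [] {k # w | k w. k < K \<and> w \<in> sub t k}"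
    using sub by auto
  also have "\<dots> = t" using plane_decomp[OF t(1,2)] unfolding K_def by simp
  finally show "hashit x 0 \<and> trunc (desc_tree x) (Suc n) = t" using hx by simp
qed

definition agree :: "(int \<Rightarrow> int) \<Rightarrow> (int \<Rightarrow> int) \<Rightarrow> int \<Rightarrow> int \<Rightarrow> bool" where
  "agree x y lo hi \<longleftrightarrow> (\<forall>i. lo \<le> i \<and> i < hi \<longrightarrow> x i = y i)"

lemma agree_sub: "agree x y lo hi \<Longrightarrow> lo \<le> lo' \<Longrightarrow> hi' \<le> hi \<Longrightarrow> agree x y lo' hi'"
  by (auto simp: agree_def)

lemma agree_sym: "agree x y lo hi \<Longrightarrow> agree y x lo hi"
  by (auto simp: agree_def)

lemma agree_sh: "agree x y (lo + a) (hi + a) \<Longrightarrow> agree (sh x a) (sh y a) lo hi"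
  by (auto simp: agree_def sh_def)

lemma Sw_agree: "agree x y (a - int m) a \<Longrightarrow> Sw x a m = Sw y a m"
  unfolding Sw_def agree_def by (intro sum.cong) auto

lemma hit_transfer:
  assumes "lbx x" "hashit x a" "agree x y (a - int (hit x a)) a"
  shows "hashit y a \<and> hit y a = hit x a"
proof -
  note hp = hit_props[OF assms(2,1)]
  have eq: "Sw y a m = Sw x a m" if "m \<le> hit x a" for m
  proof -
    have "agree x y (a - int m) a" by (rule agree_sub[OF assms(3)]) (use that in auto)
    then show ?thesis using Sw_agree by metis
  qed
  have "Sw y a (hit x a) < 0" using eq[of "hit x a"] hp(1) by simp
  moreover have "\<And>m. m < hit x a \<Longrightarrow> Sw y a m \<ge> 0" using eq hp(3) by simp
  ultimately show ?thesis using hit_unique by blast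
qed

lemma chainK:
  assumes "lbx x" "hashit x 0"
  shows "chain x (-1) (nat (x (-1) + 1)) = - int (hit x 0)"
proof -
  define K where "K = nat (x (-1) + 1)"
  have xK: "x (-1) = int K - 1" using K_def_lemma[OF assms(1)] unfolding K_def .
  have h: "\<forall>r<K. hashit x (chain x (-1) r)" using chain_hashit[OF assms xK] by blast
  have "chain x (-1) K \<le> -1" using chain_inv[OF assms(1) xK order.refl h] by blast
  then show ?thesis using hit0_chain[OF assms] unfolding K_def[symmetric] by simp
qed

lemma chain_le:
  assumes "lbx x" "hashit x 0" "x (-1) = int K - 1" "r \<le> r'" "r' \<le> K"
  shows "chain x (-1) r' \<le> chain x (-1) r"
  using chain_mono[OF assms(1-3), of r r'] assms(4,5) by (cases "r = r'") auto

lemma tree_window: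
  assumes "lbx x" "lbx y" "hashit x 0" "agree x y (- int (hit x 0)) 0"
  shows "hashit y 0 \<and> hit y 0 = hit x 0 \<and> trunc (desc_tree x) n = trunc (desc_tree y) n"
  using assms
proof (induction n arbitrary: x y)
  case 0
  then show ?case using hit_transfer[of x 0 y] by (simp add: trunc_0)
next
  case (Suc n)
  have hy: "hashit y 0" "hit y 0 = hit x 0" using hit_transfer[of x 0 y] Suc.prems by auto
  define K where "K = nat (x (-1) + 1)"
  have xK: "x (-1) = int K - 1" using K_def_lemma[OF Suc.prems(1)] unfolding K_def .
  have hpos: "hit x 0 > 0" using hit_props(2)[OF Suc.prems(3,1)] .
  have yx1: "y (-1) = x (-1)" using Suc.prems(4) hpos unfolding agree_def by auto
  have yK: "y (-1) = int K - 1" using xK yx1 by simp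
  have h: "\<forall>r<K. hashit x (chain x (-1) r)" using chain_hashit[OF Suc.prems(1,3) xK] by blast
  have cK: "chain x (-1) K = - int (hit x 0)" using chainK[OF Suc.prems(1,3)] unfolding K_def .
  have win: "agree x y (chain x (-1) r - int (hit x (chain x (-1) r))) (chain x (-1) r)" if "r < K" for r
  proof -
    have "chain x (-1) (Suc r) \<ge> chain x (-1) K" using chain_le[OF Suc.prems(1,3) xK, of "Suc r" K] that by simp
    moreover have "chain x (-1) r \<le> -1" using chain_inv[OF Suc.prems(1) xK, of r] h that by auto
    ultimately show ?thesis using agree_sub[OF Suc.prems(4)] cK by simp
  qed
  have hits: "hashit y (chain x (-1) r) \<and> hit y (chain x (-1) r) = hit x (chain x (-1) r)" if "r < K" for r
    using hit_transfer[OF Suc.prems(1) _ win[OF that]] h that by blast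
  have ceq: "r \<le> K \<Longrightarrow> chain y (-1) r = chain x (-1) r" for r
  proof (induction r)
    case 0 then show ?case by simp
  next
    case (Suc r)
    then show ?case using hits[of r] by simp
  qed
  have sub: "trunc (desc_tree (sh x (chain x (-1) r))) n = trunc (desc_tree (sh y (chain x (-1) r))) n"
    if "r < K" for r
  proof -
    define c where "c = chain x (-1) r"
    have "hashit (sh x c) 0" using h that unfolding c_def by (simp add: hashit_sh)
    moreover have "agree (sh x c) (sh y c) (- int (hit (sh x c) 0)) 0"
      using win[OF that] unfolding c_def[symmetric] by (intro agree_sh) (simp add: hit_sh)
    ultimately show ?thesis
      using Suc.IH[of "sh x c" "sh y c"] Suc.prems(1,2) unfolding c_def[symmetric] by (simp add: lbx_sh)
  qed
  have "trunc (desc_tree x) (Suc n) = trunc (desc_tree y) (Suc n)"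
    unfolding trunc_Suc[OF Suc.prems(1,3) xK] trunc_Suc[OF Suc.prems(2) hy(1) yK]
    using sub ceq by (auto intro!: arg_cong[where f="insert []"])
  then show ?case using hy by simp
qed

definition wdet :: "((int \<Rightarrow> int) \<Rightarrow> bool) \<Rightarrow> nat \<Rightarrow> bool" where
  "wdet Q N \<longleftrightarrow> (\<forall>x y. lbx x \<longrightarrow> lbx y \<longrightarrow> agree x y (- int N) 0 \<longrightarrow> Q x \<longrightarrow> Q y)"

lemma wdet_G: "wdet (\<lambda>y. hashit y 0 \<and> hit y 0 = N \<and> trunc (desc_tree y) n = s) N"
  unfolding wdet_def using tree_window by metis

lemma wdet_mono: "wdet Q N \<Longrightarrow> N \<le> N' \<Longrightarrow> wdet Q N'"
  unfolding wdet_def by (meson agree_sub neg_le_iff_le of_nat_le_iff order.refl)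

lemma wdet_conj_sh:
  assumes "wdet Q1 N" "wdet Q2 L"
  shows "wdet (\<lambda>x. Q1 x \<and> Q2 (sh x (- int N))) (N + L)"
  unfolding wdet_def
proof (intro allI impI)
  fix x y assume a: "lbx x" "lbx y" "agree x y (- int (N + L)) 0" "Q1 x \<and> Q2 (sh x (- int N))"
  have "Q1 y" using assms(1) a agree_sub[OF a(3), of "- int N" 0] unfolding wdet_def by auto
  moreover have "agree (sh x (- int N)) (sh y (- int N)) (- int L) 0"
    by (rule agree_sh) (rule agree_sub[OF a(3)], auto)
  then have "Q2 (sh y (- int N))" using assms(2) a unfolding wdet_def by (meson lbx_sh)
  ultimately show "Q1 y \<and> Q2 (sh y (- int N))" by simp
qed

lemma wdet_x1: "wdet (\<lambda>x. x (-1) = c) 1"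
  unfolding wdet_def agree_def by auto

lemma wdet_ex:
  assumes "\<And>N. N \<le> M \<Longrightarrow> wdet (Q N) M"
  shows "wdet (\<lambda>y. \<exists>N\<le>M. Q N y) M"
  using assms unfolding wdet_def by blast

fun FL :: "nat list set list \<Rightarrow> nat \<Rightarrow> (int \<Rightarrow> int) \<Rightarrow> nat \<Rightarrow> bool" where
  "FL [] n y M \<longleftrightarrow> M = 0"
| "FL (s # ss) n y M \<longleftrightarrow> (\<exists>N\<le>M. (hashit y 0 \<and> hit y 0 = N \<and> trunc (desc_tree y) n = s) \<and>
      FL ss n (sh y (- int N)) (M - N))"

lemma wdet_FL: "wdet (\<lambda>y. FL ss n y M) M"
proof (induction ss arbitrary: M)
  case Nil
  show ?case unfolding wdet_def by simp
next
  case (Cons s ss)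
  have "wdet (\<lambda>y. (hashit y 0 \<and> hit y 0 = N \<and> trunc (desc_tree y) n = s) \<and>
      FL ss n (sh y (- int N)) (M - N)) M" if "N \<le> M" for N
    using wdet_conj_sh[OF wdet_G[where N=N and n=n and s=s] Cons.IH[of "M - N"]] that by simp
  then show ?case unfolding FL.simps by (rule wdet_ex)
qed

lemma Forest_FL: "Forest ss n y \<longleftrightarrow> (\<exists>M. FL ss n y M)"
proof (induction ss arbitrary: y)
  case Nil then show ?case by simp
next
  case (Cons s ss)
  show ?case
  proof
    assume "Forest (s # ss) n y"
    then obtain M' where "hashit y 0" "trunc (desc_tree y) n = s" "FL ss n (sh y (- int (hit y 0))) M'"
      using Cons.IH by auto
    then have "FL (s # ss) n y (hit y 0 + M')" by auto
    then show "\<exists>M. FL (s # ss) n y M" by blast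
  next
    assume "\<exists>M. FL (s # ss) n y M"
    then show "Forest (s # ss) n y" using Cons.IH by auto
  qed
qed

lemma FL_unique: "FL ss n y M \<Longrightarrow> FL ss n y M' \<Longrightarrow> M = M'"
proof (induction ss arbitrary: y M M')
  case Nil then show ?case by simp
next
  case (Cons s ss)
  then obtain N where N: "N \<le> M" "hit y 0 = N" "FL ss n (sh y (- int N)) (M - N)" by auto
  from Cons obtain N' where N': "N' \<le> M'" "hit y 0 = N'" "FL ss n (sh y (- int N')) (M' - N')" by auto
  have "N = N'" using N N' by simp
  then have "M - N = M' - N'" using Cons.IH N(3) N'(3) by blast
  then show ?case using N(1) N'(1) \<open>N = N'\<close> by simp
qed

definition wnd :: "(int \<Rightarrow> int) \<Rightarrow> int \<Rightarrow> nat \<Rightarrow> int list" where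
  "wnd x a N = map (\<lambda>i. x (a - 1 - int i)) [0..<N]"

lemma wnd_sh: "wnd (sh x a) 0 N = wnd x a N"
  by (simp add: wnd_def sh_def algebra_simps)

lemma wnd_agree: "wnd x 0 N = wnd y 0 N \<Longrightarrow> agree x y (- int N) 0"
  unfolding agree_def
proof (intro allI impI)
  fix i assume w: "wnd x 0 N = wnd y 0 N" and i: "- int N \<le> i \<and> i < 0"
  define k where "k = nat (- 1 - i)"
  have k: "k < N" "i = 0 - 1 - int k" using i unfolding k_def by auto
  have "wnd x 0 N ! k = wnd y 0 N ! k" using w by simp
  then show "x i = y i" using k by (simp add: wnd_def)
qed

lemma measurable_map_upt:
  assumes "\<And>i. f i \<in> measurable M (count_space UNIV)"
  shows "(\<lambda>\<omega>. map (\<lambda>i. f i \<omega>) [0..<N]) \<in> measurable M (count_space (UNIV :: 'b::countable list set))"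
proof (induction N)
  case 0 then show ?case by simp
next
  case (Suc N)
  have "(\<lambda>\<omega>. (\<lambda>l. l @ [f N \<omega>]) (map (\<lambda>i. f i \<omega>) [0..<N])) \<in> measurable M (count_space UNIV)"
  proof (rule measurable_compose_countable[OF _ Suc.IH])
    fix l :: "'b list"
    show "(\<lambda>\<omega>. l @ [f N \<omega>]) \<in> measurable M (count_space UNIV)"
      by (rule measurable_compose_countable[where g="f N", OF _ assms]) simp
  qed
  then show ?case by simp
qed

definition wdset :: "((int \<Rightarrow> int) \<Rightarrow> bool) \<Rightarrow> nat \<Rightarrow> int list set" where
  "wdset Q N = {wnd y 0 N | y. lbx y \<and> Q y}"

lemma wdet_iff:
  assumes "wdet Q N" "lbx x"
  shows "Q x \<longleftrightarrow> wnd x 0 N \<in> wdset Q N"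
proof
  assume "Q x" then show "wnd x 0 N \<in> wdset Q N" using assms(2) unfolding wdset_def by blast
next
  assume "wnd x 0 N \<in> wdset Q N"
  then obtain y where y: "lbx y" "Q y" "wnd x 0 N = wnd y 0 N" unfolding wdset_def by blast
  then show "Q x" using assms agree_sym[OF wnd_agree[OF y(3)]] unfolding wdet_def by blast
qed

locale rwalk = prob_space M for M :: "'a measure" +
  fixes X :: "int \<Rightarrow> 'a \<Rightarrow> int"
  assumes Xmeas: "\<And>i. X i \<in> measurable M (count_space UNIV)"
  and Xind: "indep_vars (\<lambda>_. count_space UNIV) X UNIV"
  and Xdist: "\<And>i. distr M (count_space UNIV) (X i) = distr M (count_space UNIV) (X 0)"
  and Xlb: "\<And>i \<omega>. \<omega> \<in> space M \<Longrightarrow> X i \<omega> \<ge> -1"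
begin

definition Xs :: "'a \<Rightarrow> int \<Rightarrow> int" where "Xs \<omega> = (\<lambda>i. X i \<omega>)"

lemma lbx_Xs: "\<omega> \<in> space M \<Longrightarrow> lbx (Xs \<omega>)"
  using Xlb by (simp add: lbx_def Xs_def)

definition pX :: "int \<Rightarrow> real" where "pX v = prob {\<omega> \<in> space M. X 0 \<omega> = v}"

lemma prob_Xi: "prob {\<omega> \<in> space M. X i \<omega> = v} = pX v"
proof -
  have e: "X j -` {v} \<inter> space M = {\<omega> \<in> space M. X j \<omega> = v}" for j by auto
  have "measure (distr M (count_space UNIV) (X j)) {v} = prob {\<omega> \<in> space M. X j \<omega> = v}" for j
    using measure_distr[OF Xmeas, of "{v}" j] unfolding e by simp
  then show ?thesis unfolding pX_def using Xdist[of i] by metis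
qed

lemma wnd_meas: "(\<lambda>\<omega>. wnd (Xs \<omega>) a N) \<in> measurable M (count_space UNIV)"
  unfolding wnd_def Xs_def by (rule measurable_map_upt[OF Xmeas])

lemma wnd_point:
  assumes "length xs = N"
  shows "prob {\<omega> \<in> space M. wnd (Xs \<omega>) a N = xs} = (\<Prod>i<N. pX (xs ! i))"
proof (cases "N = 0")
  case True
  then show ?thesis using assms by (simp add: wnd_def prob_space)
next
  case False
  define J where "J = (\<lambda>i. a - 1 - int i) ` {..<N}"
  define A where "A = (\<lambda>j. X j -` {xs ! nat (a - 1 - j)} \<inter> space M)"
  have inj: "inj_on (\<lambda>i. a - 1 - int i) {..<N}" by (auto simp: inj_on_def)
  have ind: "indep_sets (\<lambda>i. {X i -` B \<inter> space M | B. B \<in> sets (count_space UNIV)}) UNIV"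
    using Xind unfolding indep_vars_def2 by blast
  have "{\<omega> \<in> space M. wnd (Xs \<omega>) a N = xs} = (\<Inter>j\<in>J. A j)"
  proof (intro set_eqI iffI)
    fix \<omega> assume "\<omega> \<in> {\<omega> \<in> space M. wnd (Xs \<omega>) a N = xs}"
    then have h: "\<omega> \<in> space M" "wnd (Xs \<omega>) a N = xs" by auto
    have "X (a - 1 - int i) \<omega> = xs ! i" if "i < N" for i
    proof -
      have "xs ! i = wnd (Xs \<omega>) a N ! i" using h(2) by simp
      then show ?thesis using that by (simp add: wnd_def Xs_def)
    qed
    note h(1) this
    then show "\<omega> \<in> (\<Inter>j\<in>J. A j)" unfolding J_def A_def by auto
  next
    fix \<omega> assume w: "\<omega> \<in> (\<Inter>j\<in>J. A j)"
    have "a - 1 \<in> J" unfolding J_def using False by (auto intro: image_eqI[of _ _ 0])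
    then have "\<omega> \<in> A (a - 1)" using w by blast
    then have sp: "\<omega> \<in> space M" unfolding A_def by blast
    have "X (a - 1 - int i) \<omega> = xs ! i" if "i < N" for i
    proof -
      have "a - 1 - int i \<in> J" using that unfolding J_def by auto
      then have "\<omega> \<in> A (a - 1 - int i)" using w by blast
      then show ?thesis unfolding A_def by simp
    qed
    then have "wnd (Xs \<omega>) a N = xs" using assms by (auto simp: wnd_def Xs_def intro: nth_equalityI)
    then show "\<omega> \<in> {\<omega> \<in> space M. wnd (Xs \<omega>) a N = xs}" using sp by simp
  qed
  also have "prob \<dots> = (\<Prod>j\<in>J. prob (A j))"
    by (rule indep_setsD[OF ind]) (use False in \<open>auto simp: J_def A_def\<close>)
  also have "\<dots> = (\<Prod>i<N. prob (A (a - 1 - int i)))"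
    unfolding J_def by (rule prod.reindex[OF inj, unfolded comp_def])
  also have "\<dots> = (\<Prod>i<N. pX (xs ! i))"
  proof (rule prod.cong[OF refl])
    fix i assume "i \<in> {..<N}"
    have "A (a - 1 - int i) = {\<omega> \<in> space M. X (a - 1 - int i) \<omega> = xs ! i}"
      unfolding A_def by auto
    then show "prob (A (a - 1 - int i)) = pX (xs ! i)" by (simp add: prob_Xi)
  qed
  finally show ?thesis .
qed

lemma wnd_distr: "distr M (count_space UNIV) (\<lambda>\<omega>. wnd (Xs \<omega>) a N) = distr M (count_space UNIV) (\<lambda>\<omega>. wnd (Xs \<omega>) 0 N)"
proof (rule measure_eqI_countable[where A=UNIV])
  fix xs :: "int list"
  have e: "emeasure (distr M (count_space UNIV) (\<lambda>\<omega>. wnd (Xs \<omega>) b N)) {xs} =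
    ennreal (if length xs = N then (\<Prod>i<N. pX (xs ! i)) else 0)" for b
  proof -
    have ee: "(\<lambda>\<omega>. wnd (Xs \<omega>) b N) -` {xs} \<inter> space M = {\<omega> \<in> space M. wnd (Xs \<omega>) b N = xs}" by auto
    have "emeasure (distr M (count_space UNIV) (\<lambda>\<omega>. wnd (Xs \<omega>) b N)) {xs} =
        emeasure M {\<omega> \<in> space M. wnd (Xs \<omega>) b N = xs}"
      using emeasure_distr[OF wnd_meas, of "{xs}" b N] unfolding ee by simp
    also have "\<dots> = ennreal (prob {\<omega> \<in> space M. wnd (Xs \<omega>) b N = xs})"
      by (rule emeasure_eq_measure)
    also have "\<dots> = ennreal (if length xs = N then (\<Prod>i<N. pX (xs ! i)) else 0)"
    proof (cases "length xs = N")
      case True then show ?thesis using wnd_point[OF True] by simp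
    next
      case False
      then have emp: "{\<omega> \<in> space M. wnd (Xs \<omega>) b N = xs} = {}" by (auto simp: wnd_def)
      show ?thesis unfolding emp using False by simp
    qed
    finally show ?thesis .
  qed
  show "emeasure (distr M (count_space UNIV) (\<lambda>\<omega>. wnd (Xs \<omega>) a N)) {xs} =
        emeasure (distr M (count_space UNIV) (\<lambda>\<omega>. wnd (Xs \<omega>) 0 N)) {xs}"
    by (simp only: e)
qed auto

lemma wnd_shift_prob: "prob {\<omega> \<in> space M. wnd (Xs \<omega>) a N \<in> S} = prob {\<omega> \<in> space M. wnd (Xs \<omega>) 0 N \<in> S}"
proof -
  have "prob {\<omega> \<in> space M. wnd (Xs \<omega>) b N \<in> S} = measure (distr M (count_space UNIV) (\<lambda>\<omega>. wnd (Xs \<omega>) b N)) S" for b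
  proof -
    have ee: "(\<lambda>\<omega>. wnd (Xs \<omega>) b N) -` S \<inter> space M = {\<omega> \<in> space M. wnd (Xs \<omega>) b N \<in> S}" by auto
    show ?thesis using measure_distr[OF wnd_meas, of S b N] unfolding ee by simp
  qed
  then show ?thesis using wnd_distr[of a N] by metis
qed

lemma wnd_indep:
  "prob {\<omega> \<in> space M. wnd (Xs \<omega>) a N \<in> S \<and> wnd (Xs \<omega>) (a - int N) L \<in> T} =
   prob {\<omega> \<in> space M. wnd (Xs \<omega>) a N \<in> S} * prob {\<omega> \<in> space M. wnd (Xs \<omega>) (a - int N) L \<in> T}"
proof -
  define K where "K = (\<lambda>b::bool. if b then {a - int N..<a} else {a - int N - int L..<a - int N})"
  have iv0: "indep_vars (\<lambda>j. PiM (K j) (\<lambda>_. count_space UNIV)) (\<lambda>j \<omega>. restrict (\<lambda>i. X i \<omega>) (K j)) UNIV"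
    by (rule indep_vars_restrict[OF Xind]) (auto simp: K_def disjoint_family_on_def) have ea: "(\<lambda>j. PiM (K j) (\<lambda>_. count_space UNIV)) = case_bool (PiM (K True) (\<lambda>_. count_space UNIV)) (PiM (K False) (\<lambda>_. count_space UNIV))"
    by (rule ext) (simp split: bool.split)
  have eb: "(\<lambda>j \<omega>. restrict (\<lambda>i. X i \<omega>) (K j)) = case_bool (\<lambda>\<omega>. restrict (\<lambda>i. X i \<omega>) (K True)) (\<lambda>\<omega>. restrict (\<lambda>i. X i \<omega>) (K False))"
    by (rule ext) (simp split: bool.split)
  have iv: "indep_var (PiM (K True) (\<lambda>_. count_space UNIV)) (\<lambda>\<omega>. restrict (\<lambda>i. X i \<omega>) (K True))
      (PiM (K False) (\<lambda>_. count_space UNIV)) (\<lambda>\<omega>. restrict (\<lambda>i. X i \<omega>) (K False))"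
    unfolding indep_var_def using iv0 unfolding ea eb .
  have cs: "PiM (K b) (\<lambda>_. count_space UNIV) = count_space (PiE (K b) (\<lambda>_. UNIV :: int set))" for b
    by (rule count_space_PiM_finite) (auto simp: K_def)
  define Y1 where "Y1 = (\<lambda>f::int \<Rightarrow> int. wnd f a N)"
  define Y2 where "Y2 = (\<lambda>f::int \<Rightarrow> int. wnd f (a - int N) L)"
  have m1: "Y1 \<in> measurable (PiM (K True) (\<lambda>_. count_space UNIV)) (count_space UNIV)"
    unfolding cs by simp
  have m2: "Y2 \<in> measurable (PiM (K False) (\<lambda>_. count_space UNIV)) (count_space UNIV)"
    unfolding cs by simp
  have iv2: "indep_var (count_space UNIV) (Y1 \<circ> (\<lambda>\<omega>. restrict (\<lambda>i. X i \<omega>) (K True)))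
      (count_space UNIV) (Y2 \<circ> (\<lambda>\<omega>. restrict (\<lambda>i. X i \<omega>) (K False)))"
    by (rule indep_var_compose[OF iv m1 m2])
  have e1: "(Y1 \<circ> (\<lambda>\<omega>. restrict (\<lambda>i. X i \<omega>) (K True))) = (\<lambda>\<omega>. wnd (Xs \<omega>) a N)"
    by (auto simp: Y1_def wnd_def K_def Xs_def fun_eq_iff)
  have e2: "(Y2 \<circ> (\<lambda>\<omega>. restrict (\<lambda>i. X i \<omega>) (K False))) = (\<lambda>\<omega>. wnd (Xs \<omega>) (a - int N) L)"
    by (auto simp: Y2_def wnd_def K_def Xs_def fun_eq_iff)
  have "prob ((\<lambda>\<omega>. (wnd (Xs \<omega>) a N, wnd (Xs \<omega>) (a - int N) L)) -` (S \<times> T) \<inter> space M) =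
        prob ((\<lambda>\<omega>. wnd (Xs \<omega>) a N) -` S \<inter> space M) * prob ((\<lambda>\<omega>. wnd (Xs \<omega>) (a - int N) L) -` T \<inter> space M)"
    using indep_varD[OF iv2[unfolded e1 e2]] by simp
  moreover have "(\<lambda>\<omega>. (wnd (Xs \<omega>) a N, wnd (Xs \<omega>) (a - int N) L)) -` (S \<times> T) \<inter> space M =
     {\<omega> \<in> space M. wnd (Xs \<omega>) a N \<in> S \<and> wnd (Xs \<omega>) (a - int N) L \<in> T}" by auto
  moreover have "(\<lambda>\<omega>. wnd (Xs \<omega>) a N) -` S \<inter> space M = {\<omega> \<in> space M. wnd (Xs \<omega>) a N \<in> S}" by auto
  moreover have "(\<lambda>\<omega>. wnd (Xs \<omega>) (a - int N) L) -` T \<inter> space M = {\<omega> \<in> space M. wnd (Xs \<omega>) (a - int N) L \<in> T}" by auto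
  ultimately show ?thesis by simp
qed

end

lemma sh_0[simp]: "sh x 0 = x" by (simp add: sh_def)

definition Fs :: "nat \<Rightarrow> nat list set \<Rightarrow> (int \<Rightarrow> int) \<Rightarrow> bool" where
  "Fs n s y \<longleftrightarrow> hashit y 0 \<and> trunc (desc_tree y) n = s"

context rwalk
begin

definition ev :: "((int \<Rightarrow> int) \<Rightarrow> bool) \<Rightarrow> 'a set" where
  "ev Q = {\<omega> \<in> space M. Q (Xs \<omega>)}"

lemma ev_sh_wnd:
  assumes "wdet Q N"
  shows "ev (\<lambda>x. Q (sh x a)) = {\<omega> \<in> space M. wnd (Xs \<omega>) a N \<in> wdset Q N}"
  unfolding ev_def using wdet_iff[OF assms lbx_sh[OF lbx_Xs]] wnd_sh by auto

lemma wnd_set_meas: "{\<omega> \<in> space M. wnd (Xs \<omega>) a N \<in> S} \<in> events"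
proof -
  have "{\<omega> \<in> space M. wnd (Xs \<omega>) a N \<in> S} = (\<lambda>\<omega>. wnd (Xs \<omega>) a N) -` S \<inter> space M" by auto
  then show ?thesis using measurable_sets[OF wnd_meas, of S a N] by simp
qed

lemma ev_meas_sh: "wdet Q N \<Longrightarrow> ev (\<lambda>x. Q (sh x a)) \<in> events"
  using ev_sh_wnd wnd_set_meas by simp

lemma ev_meas: "wdet Q N \<Longrightarrow> ev Q \<in> events"
  using ev_meas_sh[of Q N 0] by simp

lemma ev_shift: "wdet Q N \<Longrightarrow> prob (ev (\<lambda>x. Q (sh x a))) = prob (ev Q)"
  using ev_sh_wnd[of Q N a] ev_sh_wnd[of Q N 0] wnd_shift_prob by simp

lemma ev_indep:
  assumes "wdet Q1 N" "wdet Q2 L"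
  shows "prob (ev (\<lambda>x. Q1 x \<and> Q2 (sh x (- int N)))) = prob (ev Q1) * prob (ev Q2)"
proof -
  have "ev (\<lambda>x. Q1 x \<and> Q2 (sh x (- int N))) =
     {\<omega> \<in> space M. wnd (Xs \<omega>) 0 N \<in> wdset Q1 N \<and> wnd (Xs \<omega>) (0 - int N) L \<in> wdset Q2 L}"
    using wdet_iff[OF assms(1) lbx_Xs] wdet_iff[OF assms(2) lbx_sh[OF lbx_Xs]] wnd_sh
    unfolding ev_def by auto
  also have "prob \<dots> = prob {\<omega> \<in> space M. wnd (Xs \<omega>) 0 N \<in> wdset Q1 N} *
      prob {\<omega> \<in> space M. wnd (Xs \<omega>) (0 - int N) L \<in> wdset Q2 L}"
    by (rule wnd_indep)
  also have "\<dots> = prob (ev Q1) * prob (ev Q2)"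
    using ev_sh_wnd[OF assms(1), of 0] ev_sh_wnd[OF assms(2), of 0] wnd_shift_prob[of "0 - int N" L]
    by simp
  finally show ?thesis .
qed

lemma ev_sums:
  assumes meas: "\<And>m. ev (Q m) \<in> events"
    and excl: "\<And>m m' x. lbx x \<Longrightarrow> Q m x \<Longrightarrow> Q m' x \<Longrightarrow> m = m'"
  shows "(\<lambda>m::nat. prob (ev (Q m))) sums prob (ev (\<lambda>x. \<exists>m. Q m x))"
proof -
  have "(\<lambda>m. prob (ev (Q m))) sums prob (\<Union>m. ev (Q m))"
  proof (rule finite_measure_UNION)
    show "range (\<lambda>m. ev (Q m)) \<subseteq> events" using meas by auto
    show "disjoint_family (\<lambda>m. ev (Q m))"
      unfolding disjoint_family_on_def ev_def using excl lbx_Xs by blast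
  qed
  moreover have "(\<Union>m. ev (Q m)) = ev (\<lambda>x. \<exists>m. Q m x)" unfolding ev_def by auto
  ultimately show ?thesis by simp
qed

lemma ev_meas_ex: "(\<And>m::nat. ev (Q m) \<in> events) \<Longrightarrow> ev (\<lambda>x. \<exists>m. Q m x) \<in> events"
proof -
  assume "\<And>m::nat. ev (Q m) \<in> events"
  then have "(\<Union>m. ev (Q m)) \<in> events" by blast
  moreover have "(\<Union>m. ev (Q m)) = ev (\<lambda>x. \<exists>m. Q m x)" unfolding ev_def by auto
  ultimately show ?thesis by simp
qed

lemma ev_indep_ex:
  assumes "wdet Q1 N" "\<And>m. wdet (Q2 m) m"
    and excl: "\<And>m m' x. lbx x \<Longrightarrow> Q2 m x \<Longrightarrow> Q2 m' x \<Longrightarrow> m = m'"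
  shows "prob (ev (\<lambda>x. Q1 x \<and> (\<exists>m. Q2 m (sh x (- int N))))) = prob (ev Q1) * prob (ev (\<lambda>x. \<exists>m. Q2 m x))"
proof -
  have w: "wdet (\<lambda>x. Q1 x \<and> Q2 m (sh x (- int N))) (N + m)" for m
    by (rule wdet_conj_sh[OF assms(1,2)])
  have s1: "(\<lambda>m. prob (ev (\<lambda>x. Q1 x \<and> Q2 m (sh x (- int N))))) sums
      prob (ev (\<lambda>x. \<exists>m. Q1 x \<and> Q2 m (sh x (- int N))))"
    by (rule ev_sums[OF ev_meas[OF w]]) (use excl lbx_sh in blast)
  have s2: "(\<lambda>m. prob (ev (Q2 m))) sums prob (ev (\<lambda>x. \<exists>m. Q2 m x))"
    by (rule ev_sums[OF ev_meas[OF assms(2)]]) (use excl in blast)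
  have "(\<lambda>m. prob (ev (\<lambda>x. Q1 x \<and> Q2 m (sh x (- int N))))) = (\<lambda>m. prob (ev Q1) * prob (ev (Q2 m)))"
    using ev_indep[OF assms(1,2)] by simp
  then have "(\<lambda>m. prob (ev Q1) * prob (ev (Q2 m))) sums prob (ev (\<lambda>x. \<exists>m. Q1 x \<and> Q2 m (sh x (- int N))))"
    using s1 by simp
  moreover have "(\<lambda>m. prob (ev Q1) * prob (ev (Q2 m))) sums (prob (ev Q1) * prob (ev (\<lambda>x. \<exists>m. Q2 m x)))"
    by (rule sums_mult[OF s2])
  ultimately have "prob (ev (\<lambda>x. \<exists>m. Q1 x \<and> Q2 m (sh x (- int N)))) = prob (ev Q1) * prob (ev (\<lambda>x. \<exists>m. Q2 m x))"
    using sums_unique2 by blast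
  moreover have "ev (\<lambda>x. \<exists>m. Q1 x \<and> Q2 m (sh x (- int N))) = ev (\<lambda>x. Q1 x \<and> (\<exists>m. Q2 m (sh x (- int N))))"
    unfolding ev_def by auto
  ultimately show ?thesis by simp
qed

lemma ev_cong: "(\<And>x. lbx x \<Longrightarrow> P x \<longleftrightarrow> Q x) \<Longrightarrow> ev P = ev Q"
  unfolding ev_def using lbx_Xs by auto

lemma hit_excl: "hashit y 0 \<and> hit y 0 = N \<and> P \<Longrightarrow> hashit y 0 \<and> hit y 0 = N' \<and> P' \<Longrightarrow> N = N'"
  by simp

lemma Forest_prob:
  "prob (ev (Forest ss n)) = prod_list (map (\<lambda>s. prob (ev (Fs n s))) ss)"
proof (induction ss)
  case Nil
  have "ev (\<lambda>_. True) = space M" unfolding ev_def by simp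
  then show ?case by (simp add: prob_space)
next
  case (Cons s ss)
  define G where "G = (\<lambda>N y. hashit y 0 \<and> hit y 0 = N \<and> trunc (desc_tree y) n = s)"
  have wG: "wdet (G N) N" for N unfolding G_def by (rule wdet_G)
  have exG: "G N y \<Longrightarrow> G N' y \<Longrightarrow> N = N'" for N N' y unfolding G_def by simp
  have wFL: "wdet (\<lambda>y. FL ss n y m) m" for m by (rule wdet_FL)
  have exFL: "FL ss n y m \<Longrightarrow> FL ss n y m' \<Longrightarrow> m = m'" for y m m' by (rule FL_unique)
  define R where "R = (\<lambda>N x. G N x \<and> (\<exists>m. FL ss n (sh x (- int N)) m))"
  have measR: "ev (R N) \<in> events" for N
  proof -
    have "ev (R N) = ev (\<lambda>x. \<exists>m. G N x \<and> FL ss n (sh x (- int N)) m)" unfolding R_def ev_def by auto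
    moreover have "ev (\<lambda>x. \<exists>m. G N x \<and> FL ss n (sh x (- int N)) m) \<in> events"
      by (rule ev_meas_ex, rule ev_meas, rule wdet_conj_sh[OF wG wFL])
    ultimately show ?thesis by simp
  qed
  have s1: "(\<lambda>N. prob (ev (R N))) sums prob (ev (\<lambda>x. \<exists>N. R N x))"
    by (rule ev_sums[OF measR]) (auto simp: R_def G_def)
  have PR: "prob (ev (R N)) = prob (ev (G N)) * prob (ev (Forest ss n))" for N
  proof -
    have "prob (ev (R N)) = prob (ev (G N)) * prob (ev (\<lambda>x. \<exists>m. FL ss n x m))"
      unfolding R_def by (rule ev_indep_ex[OF wG wFL exFL])
    moreover have "ev (\<lambda>x. \<exists>m. FL ss n x m) = ev (Forest ss n)"
      unfolding ev_def by (simp add: Forest_FL)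
    ultimately show ?thesis by simp
  qed
  have s2: "(\<lambda>N. prob (ev (G N))) sums prob (ev (\<lambda>x. \<exists>N. G N x))"
    by (rule ev_sums[OF ev_meas[OF wG]]) (auto simp: G_def)
  have "(\<lambda>N. prob (ev (G N)) * prob (ev (Forest ss n))) sums (prob (ev (\<lambda>x. \<exists>N. G N x)) * prob (ev (Forest ss n)))"
    by (rule sums_mult2[OF s2])
  then have "prob (ev (\<lambda>x. \<exists>N. R N x)) = prob (ev (\<lambda>x. \<exists>N. G N x)) * prob (ev (Forest ss n))"
    using s1 PR sums_unique2 by simp
  moreover have "ev (\<lambda>x. \<exists>N. R N x) = ev (Forest (s # ss) n)"
    unfolding ev_def R_def G_def by (auto simp: Forest_FL[symmetric])
  moreover have "ev (\<lambda>x. \<exists>N. G N x) = ev (Fs n s)"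
    unfolding ev_def G_def Fs_def by auto
  ultimately show ?case using Cons.IH by (simp del: Forest.simps)
qed

definition pK :: "nat \<Rightarrow> real" where "pK k = prob {\<omega> \<in> space M. X 0 \<omega> + 1 = int k}"

lemma pK_pX: "pK k = pX (int k - 1)"
  unfolding pK_def pX_def by (rule arg_cong[where f=prob]) auto

lemma rec_prob:
  assumes t: "plane_tree t" "finite t" "\<forall>u\<in>t. length u \<le> Suc n"
  shows "prob (ev (Fs (Suc n) t)) = pK (nchild t []) * (\<Prod>k<nchild t []. prob (ev (Fs n (sub t k))))"
proof -
  define K where "K = nchild t []"
  define ss where "ss = map (sub t) (rev [0..<K])"
  have "ev (Fs (Suc n) t) = ev (\<lambda>x. x (-1) = int K - 1 \<and> (\<exists>m. FL ss n (sh x (- int 1)) m))"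
    by (rule ev_cong) (use event_decomp[OF _ t] in \<open>simp add: Fs_def K_def ss_def Forest_FL\<close>)
  also have "prob \<dots> = prob (ev (\<lambda>x. x (-1) = int K - 1)) * prob (ev (\<lambda>x. \<exists>m. FL ss n x m))"
    by (rule ev_indep_ex[OF wdet_x1 wdet_FL FL_unique])
  also have "prob (ev (\<lambda>x. x (-1) = int K - 1)) = pK K"
  proof -
    have "ev (\<lambda>x. x (-1) = int K - 1) = {\<omega> \<in> space M. X (-1) \<omega> = int K - 1}" unfolding ev_def Xs_def by simp
    then show ?thesis using prob_Xi pK_pX by simp
  qed
  also have "ev (\<lambda>x. \<exists>m. FL ss n x m) = ev (Forest ss n)" unfolding ev_def by (simp add: Forest_FL)
  also have "prob (ev (Forest ss n)) = prod_list (map (\<lambda>s. prob (ev (Fs n s))) ss)" by (rule Forest_prob)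
  also have "\<dots> = (\<Prod>k<K. prob (ev (Fs n (sub t k))))"
  proof -
    have "prod_list (map (\<lambda>s. prob (ev (Fs n s))) ss) = prod_list (map (\<lambda>k. prob (ev (Fs n (sub t k)))) (rev [0..<K]))"
      unfolding ss_def by (simp add: comp_def)
    also have "\<dots> = (\<Prod>k\<in>set (rev [0..<K]). prob (ev (Fs n (sub t k))))"
      by (rule prod.distinct_set_conv_list[symmetric]) simp
    also have "set (rev [0..<K]) = {..<K}" by auto
    finally show ?thesis .
  qed
  finally show ?thesis unfolding K_def .
qed

end

context rwalk
begin

lemma sum_X_meas: "finite F \<Longrightarrow> (\<lambda>\<omega>. \<Sum>l\<in>F. X l \<omega>) \<in> measurable M (count_space UNIV)"
proof (induction F rule: finite_induct)
  case empty then show ?case by simp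
next
  case (insert a F)
  have "(\<lambda>\<omega>. (\<lambda>s. X a \<omega> + s) (\<Sum>l\<in>F. X l \<omega>)) \<in> measurable M (count_space UNIV)"
  proof (rule measurable_compose_countable[OF _ insert.IH])
    fix s :: int
    show "(\<lambda>\<omega>. X a \<omega> + s) \<in> measurable M (count_space UNIV)"
      by (rule measurable_compose_countable[where g="X a", OF _ Xmeas]) simp
  qed
  then show ?case using insert by simp
qed

lemma pred_sum_X[measurable]: "finite F \<Longrightarrow> Measurable.pred M (\<lambda>\<omega>. P (\<Sum>l\<in>F. X l \<omega>))"
  by (rule measurable_compose[OF sum_X_meas measurable_count_space])

lemma record_map_meas: "(\<lambda>\<omega>. record_map (Xs \<omega>) i) \<in> measurable M (count_space UNIV)"
proof (subst measurable_count_space_eq2_countable, intro conjI ballI)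
  show "(\<lambda>\<omega>. record_map (Xs \<omega>) i) \<in> space M \<rightarrow> UNIV" by simp
  fix v :: int
  have "(\<lambda>\<omega>. record_map (Xs \<omega>) i) -` {v} \<inter> space M =
    {\<omega> \<in> space M. (v = i \<and> (\<forall>n>i. (\<Sum>l\<in>{i..<n}. X l \<omega>) < 0)) \<or>
     (i < v \<and> (\<Sum>l\<in>{i..<v}. X l \<omega>) \<ge> 0 \<and> (\<forall>n. i < n \<and> n < v \<longrightarrow> (\<Sum>l\<in>{i..<n}. X l \<omega>) < 0))}"
    using record_map_char[of "Xs _" i v] by (auto simp: Xs_def)
  also have "\<dots> \<in> sets M" by measurable
  finally show "(\<lambda>\<omega>. record_map (Xs \<omega>) i) -` {v} \<inter> space M \<in> sets M" .
qed


lemma pred_cs: "f \<in> measurable M (count_space (UNIV :: 'c set)) \<Longrightarrow> Measurable.pred M (\<lambda>\<omega>. P (f \<omega>))"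
  by (rule measurable_compose[OF _ measurable_count_space])

lemma funpow_meas: "(\<lambda>\<omega>. (record_map (Xs \<omega>) ^^ n) j) \<in> measurable M (count_space UNIV)"
proof (induction n)
  case 0 then show ?case by simp
next
  case (Suc n)
  have "(\<lambda>\<omega>. (\<lambda>i \<omega>. record_map (Xs \<omega>) i) ((record_map (Xs \<omega>) ^^ n) j) \<omega>) \<in> measurable M (count_space UNIV)"
    by (rule measurable_compose_countable[OF record_map_meas Suc.IH])
  then show ?case by simp
qed

lemma pred_funpow_eq[measurable]: "Measurable.pred M (\<lambda>\<omega>. (record_map (Xs \<omega>) ^^ n) j = c)"
  using pred_cs[OF funpow_meas, where P="\<lambda>z. z = c"] by simp

lemma pred_rm_eq[measurable]: "Measurable.pred M (\<lambda>\<omega>. record_map (Xs \<omega>) j = c)"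
  using pred_cs[OF record_map_meas, where P="\<lambda>z. z = c"] by simp

lemma pred_rm_eq2[measurable]: "Measurable.pred M (\<lambda>\<omega>. record_map (Xs \<omega>) j \<noteq> c)"
  using pred_cs[OF record_map_meas, where P="\<lambda>z. z \<noteq> c"] by simp

lemma pred_desc0[measurable]: "Measurable.pred M (\<lambda>\<omega>. j \<in> desc0 (Xs \<omega>))"
proof -
  have "(\<lambda>\<omega>. j \<in> desc0 (Xs \<omega>)) = (\<lambda>\<omega>. j = 0 \<or> (j \<noteq> 0 \<and> (\<exists>n::nat. n \<ge> 1 \<and> (record_map (Xs \<omega>) ^^ n) j = 0)))"
    by (auto simp: desc0_def)
  moreover have "Measurable.pred M (\<lambda>\<omega>. j = 0 \<or> (j \<noteq> 0 \<and> (\<exists>n::nat. n \<ge> 1 \<and> (record_map (Xs \<omega>) ^^ n) j = 0)))"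
    by measurable
  ultimately show ?thesis by simp
qed

lemma pred_rch[measurable]: "Measurable.pred M (\<lambda>\<omega>. j \<in> rchildren (Xs \<omega>) v)"
proof -
  have "(\<lambda>\<omega>. j \<in> rchildren (Xs \<omega>) v) = (\<lambda>\<omega>. j \<in> desc0 (Xs \<omega>) \<and> record_map (Xs \<omega>) j \<noteq> j \<and> record_map (Xs \<omega>) j = v)"
    by (auto simp: rchildren_def)
  moreover have "Measurable.pred M (\<lambda>\<omega>. j \<in> desc0 (Xs \<omega>) \<and> record_map (Xs \<omega>) j \<noteq> j \<and> record_map (Xs \<omega>) j = v)"
    by measurable
  ultimately show ?thesis by simp
qed

lemma finite_card_iff_list:
  "finite A \<and> k = card A \<longleftrightarrow> (\<exists>l. distinct l \<and> length l = k \<and> (\<forall>z. z \<in> set l \<longleftrightarrow> z \<in> A))"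
proof
  assume "finite A \<and> k = card A"
  then obtain l where "distinct l" "set l = A" using finite_distinct_list by blast
  then show "\<exists>l. distinct l \<and> length l = k \<and> (\<forall>z. z \<in> set l \<longleftrightarrow> z \<in> A)"
    using \<open>finite A \<and> k = card A\<close> distinct_card by fastforce
next
  assume "\<exists>l. distinct l \<and> length l = k \<and> (\<forall>z. z \<in> set l \<longleftrightarrow> z \<in> A)"
  then obtain l where "distinct l" "length l = k" "set l = A" by auto
  then show "finite A \<and> k = card A" using distinct_card by fastforce
qed

lemma pred_card[measurable]: "Measurable.pred M (\<lambda>\<omega>. finite {j' \<in> rchildren (Xs \<omega>) v. j' < j} \<and> k = card {j' \<in> rchildren (Xs \<omega>) v. j' < j})"
proof -
  have "(\<lambda>\<omega>. finite {j' \<in> rchildren (Xs \<omega>) v. j' < j} \<and> k = card {j' \<in> rchildren (Xs \<omega>) v. j' < j}) =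
    (\<lambda>\<omega>. \<exists>l::int list. distinct l \<and> length l = k \<and> (\<forall>z. z \<in> set l \<longleftrightarrow> (z \<in> rchildren (Xs \<omega>) v \<and> z < j)))"
    by (subst finite_card_iff_list) simp
  moreover have "Measurable.pred M (\<lambda>\<omega>. \<exists>l::int list. distinct l \<and> length l = k \<and> (\<forall>z. z \<in> set l \<longleftrightarrow> (z \<in> rchildren (Xs \<omega>) v \<and> z < j)))"
    by measurable
  ultimately show ?thesis by simp
qed

lemma pred_desc_label[measurable]: "Measurable.pred M (\<lambda>\<omega>. desc_label (Xs \<omega>) u v)"
proof (induction u arbitrary: v rule: rev_induct)
  case Nil
  then show ?case by (simp add: desc_label_Nil)
next
  case (snoc k u)
  have "(\<lambda>\<omega>. desc_label (Xs \<omega>) (u @ [k]) v) = (\<lambda>\<omega>. \<exists>p. desc_label (Xs \<omega>) u p \<and> v \<in> rchildren (Xs \<omega>) p \<and>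
      (finite {j' \<in> rchildren (Xs \<omega>) p. j' < v} \<and> k = card {j' \<in> rchildren (Xs \<omega>) p. j' < v}))"
    by (simp add: desc_label_snoc)
  moreover have "Measurable.pred M (\<lambda>\<omega>. \<exists>p. desc_label (Xs \<omega>) u p \<and> v \<in> rchildren (Xs \<omega>) p \<and>
      (finite {j' \<in> rchildren (Xs \<omega>) p. j' < v} \<and> k = card {j' \<in> rchildren (Xs \<omega>) p. j' < v}))"
    using snoc.IH by measurable
  ultimately show ?case by simp
qed

lemma pred_trunc: "Measurable.pred M (\<lambda>\<omega>. trunc (desc_tree (Xs \<omega>)) n = t)"
proof -
  have "(\<lambda>\<omega>. trunc (desc_tree (Xs \<omega>)) n = t) =
    (\<lambda>\<omega>. \<forall>u::nat list. ((\<exists>v::int. desc_label (Xs \<omega>) u v) \<and> length u \<le> n) \<longleftrightarrow> u \<in> t)"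
    by (auto simp: trunc_def desc_tree_def)
  moreover have "Measurable.pred M (\<lambda>\<omega>. \<forall>u::nat list. ((\<exists>v::int. desc_label (Xs \<omega>) u v) \<and> length u \<le> n) \<longleftrightarrow> u \<in> t)"
    by measurable
  ultimately show ?thesis by simp
qed

end

lemma fixpoint_one:
  fixes p :: "nat \<Rightarrow> real" and q :: real
  assumes nn: "\<And>k. p k \<ge> 0" and s1: "p sums 1" and sm: "summable (\<lambda>k. real k * p k)"
    and m1: "(\<Sum>k. real k * p k) \<le> 1"
    and p0: "p 0 > 0" and q0: "0 \<le> q" and q1: "q \<le> 1" and fp: "(\<lambda>k. p k * q ^ k) sums q"
  shows "q = 1"
proof (rule ccontr)
  assume "q \<noteq> 1"
  then have ql: "q < 1" using q1 by simp
  define h where "h k = (\<Sum>i<k. q ^ i)" for k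
  have a: "(\<lambda>k. p k - p k * q ^ k) sums (1 - q)" by (rule sums_diff[OF s1 fp])
  have e: "p k - p k * q ^ k = (1 - q) * (p k * h k)" for k
  proof -
    have "p k - p k * q ^ k = p k * (1 - q ^ k)" by (simp add: algebra_simps)
    also have "\<dots> = p k * ((1 - q) * h k)" unfolding h_def by (simp add: one_diff_power_eq)
    finally show ?thesis by (simp add: algebra_simps)
  qed
  have "(\<lambda>k. (1 - q) * (p k * h k)) sums (1 - q)" using a unfolding e .
  then have "(\<lambda>k. (1 / (1 - q)) * ((1 - q) * (p k * h k))) sums ((1 / (1 - q)) * (1 - q))"
    by (rule sums_mult)
  then have b: "(\<lambda>k. p k * h k) sums 1" using ql by simp
  have hk: "h k \<le> real k" for k
  proof -
    have "h k \<le> (\<Sum>i<k. 1)" unfolding h_def by (rule sum_mono) (use q0 q1 in \<open>simp add: power_le_one\<close>)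
    then show ?thesis by simp
  qed
  have hk2: "h k < real k" if "k \<ge> 2" for k
  proof -
    have "h k < (\<Sum>i<k. 1)" unfolding h_def
    proof (rule sum_strict_mono_ex1)
      show "finite {..<k}" by simp
      show "\<forall>i\<in>{..<k}. q ^ i \<le> 1" using q0 q1 by (simp add: power_le_one)
      show "\<exists>i\<in>{..<k}. q ^ i < 1" using that ql by (intro bexI[of _ 1]) auto
    qed
    then show ?thesis by simp
  qed
  define d where "d k = real k * p k - p k * h k" for k
  have dnn: "d k \<ge> 0" for k
    unfolding d_def using mult_left_mono[OF hk[of k] nn[of k]] by (simp add: algebra_simps)
  have ds: "d sums ((\<Sum>k. real k * p k) - 1)" unfolding d_def
    by (rule sums_diff[OF summable_sums[OF sm] b])
  have dz: "d k = 0" for k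
  proof -
    have "sum d {k} \<le> suminf d"
      by (rule sum_le_suminf) (use ds dnn in \<open>auto simp: sums_iff\<close>)
    moreover have "suminf d \<le> 0" using ds m1 by (simp add: sums_iff)
    ultimately show ?thesis using dnn[of k] by simp
  qed
  have pz: "p k = 0" if "k \<ge> 2" for k
  proof -
    have "d k = p k * (real k - h k)" unfolding d_def by (simp add: algebra_simps)
    moreover have "real k - h k > 0" using hk2[OF that] by simp
    ultimately show ?thesis using dz[of k] by simp
  qed
  have "(\<lambda>k. p k * h k) sums (\<Sum>k\<in>{0,1}. p k * h k)"
    by (rule sums_finite) (use pz in \<open>auto simp: not_less_eq_eq numeral_2_eq_2\<close>)
  then have "(\<Sum>k\<in>{0,1}. p k * h k) = 1" using b sums_unique2 by blast
  then have p1: "p 1 = 1" by (simp add: h_def)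
  have "p sums (\<Sum>k\<in>{0,1}. p k)"
    by (rule sums_finite) (use pz in \<open>auto simp: not_less_eq_eq numeral_2_eq_2\<close>)
  then have "(\<Sum>k\<in>{0,1}. p k) = 1" using s1 sums_unique2 by blast
  then show False using p1 p0 by simp
qed

definition star :: "nat \<Rightarrow> nat list set" where "star K = insert [] ((\<lambda>k. [k]) ` {..<K})"

lemma star_props:
  "plane_tree (star K)" "finite (star K)" "\<forall>u\<in>star K. length u \<le> Suc 0"
  "nchild (star K) [] = K" "k < K \<Longrightarrow> sub (star K) k = {[]}"
proof -
  show "plane_tree (star K)" unfolding plane_tree_def star_def
    by (auto simp: append_eq_Cons_conv)
  show "finite (star K)" unfolding star_def by simp
  show "\<forall>u\<in>star K. length u \<le> Suc 0" unfolding star_def by auto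
  have "{k. [] @ [k] \<in> star K} = {..<K}" unfolding star_def by auto
  then show "nchild (star K) [] = K" unfolding nchild_def by simp
  show "k < K \<Longrightarrow> sub (star K) k = {[]}" unfolding star_def sub_def by auto
qed

lemma Fs0: "Fs 0 {[]} y \<longleftrightarrow> hashit y 0"
  by (simp add: Fs_def trunc_0)

lemma Fs0_fun: "Fs 0 {[]} = (\<lambda>y. hashit y 0)"
  by (rule ext) (simp add: Fs0)

lemma Fs1_star:
  assumes "lbx y" "hashit y 0"
  shows "Fs 1 (star (nat (y (-1) + 1))) y"
proof -
  define K where "K = nat (y (-1) + 1)"
  have yK: "y (-1) = int K - 1" using K_def_lemma[OF assms(1)] unfolding K_def .
  have "trunc (desc_tree y) (Suc 0) = insert [] {k # w | k w. k < K \<and> w \<in> trunc (desc_tree (sh y (chain y (-1) (K - 1 - k)))) 0}"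
    by (rule trunc_Suc[OF assms yK])
  also have "\<dots> = star K" unfolding star_def trunc_0 by auto
  finally show ?thesis using assms(2) unfolding Fs_def K_def by simp
qed

context rwalk
begin

lemma Fs_meas: "ev (Fs n s) \<in> events"
proof -
  have "ev (Fs n s) = ev (\<lambda>y. \<exists>N. hashit y 0 \<and> hit y 0 = N \<and> trunc (desc_tree y) n = s)"
    unfolding ev_def Fs_def by auto
  also have "\<dots> \<in> events" by (rule ev_meas_ex, rule ev_meas, rule wdet_G)
  finally show ?thesis .
qed

definition q0 :: real where "q0 = prob (ev (\<lambda>y. hashit y 0))"

lemma q0_fix: "(\<lambda>K. pK K * q0 ^ K) sums q0"
proof -
  have P: "prob (ev (Fs 1 (star K))) = pK K * q0 ^ K" for K
  proof -
    have "prob (ev (Fs (Suc 0) (star K))) = pK K * (\<Prod>k<K. prob (ev (Fs 0 (sub (star K) k))))"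
      using rec_prob[OF star_props(1-3)] star_props(4) by simp
    also have "(\<Prod>k<K. prob (ev (Fs 0 (sub (star K) k)))) = (\<Prod>k<K. q0)"
      by (rule prod.cong[OF refl]) (simp add: star_props(5) Fs0_fun q0_def)
    finally show ?thesis by simp
  qed
  have "(\<lambda>K. prob (ev (Fs 1 (star K)))) sums prob (ev (\<lambda>x. \<exists>K. Fs 1 (star K) x))"
  proof (rule ev_sums[OF Fs_meas])
    fix K K' x assume "Fs 1 (star K) x" "Fs 1 (star K') x"
    then have "star K = star K'" by (simp add: Fs_def)
    then show "K = K'" using star_props(4) by metis
  qed
  moreover have "ev (\<lambda>x. \<exists>K. Fs 1 (star K) x) = ev (\<lambda>y. hashit y 0)"
  proof (rule ev_cong)
    fix x assume lx: "lbx x"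
    show "(\<exists>K. Fs 1 (star K) x) \<longleftrightarrow> hashit x 0"
    proof
      assume "\<exists>K. Fs 1 (star K) x" then show "hashit x 0" by (auto simp: Fs_def)
    next
      assume h: "hashit x 0" show "\<exists>K. Fs 1 (star K) x" using Fs1_star[OF lx h] by blast
    qed
  qed
  ultimately show ?thesis using P unfolding q0_def by simp
qed

lemma pK_nn: "pK k \<ge> 0" by (simp add: pK_def)

lemma A_meas: "{\<omega> \<in> space M. X 0 \<omega> + 1 = int k} \<in> events"
proof -
  have "Measurable.pred M (\<lambda>\<omega>. X 0 \<omega> + 1 = int k)"
    by (rule measurable_compose[OF Xmeas measurable_count_space])
  then show ?thesis by (simp add: pred_def)
qed

lemma pK_sums: "pK sums 1"
proof -
  have "(\<lambda>k. prob {\<omega> \<in> space M. X 0 \<omega> + 1 = int k}) sums prob (\<Union>k. {\<omega> \<in> space M. X 0 \<omega> + 1 = int k})"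
    by (rule finite_measure_UNION) (auto simp: A_meas disjoint_family_on_def)
  moreover have "(\<Union>k. {\<omega> \<in> space M. X 0 \<omega> + 1 = int k}) = space M"
  proof (intro set_eqI iffI)
    fix \<omega> assume w: "\<omega> \<in> space M"
    then have "X 0 \<omega> + 1 = int (nat (X 0 \<omega> + 1))" using Xlb[OF w, of 0] by simp
    then show "\<omega> \<in> (\<Union>k. {\<omega> \<in> space M. X 0 \<omega> + 1 = int k})" using w by blast
  qed auto
  ultimately show ?thesis unfolding pK_def by (simp add: prob_space)
qed

lemma pK_mean:
  assumes int: "integrable M (\<lambda>\<omega>. real_of_int (X 0 \<omega>))" and neg: "(\<integral>\<omega>. real_of_int (X 0 \<omega>) \<partial>M) \<le> 0"
  shows "summable (\<lambda>k. real k * pK k)" "(\<Sum>k. real k * pK k) \<le> 1"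
proof -
  define A where "A k = {\<omega> \<in> space M. X 0 \<omega> + 1 = int k}" for k
  have Ai: "integrable M (indicator (A k) :: 'a \<Rightarrow> real)" for k
    unfolding A_def by (rule integrable_real_indicator[OF A_meas]) (simp add: emeasure_eq_measure)
  have part: "(\<Sum>k<L. real k * pK k) \<le> 1" for L
  proof -
    have "(\<Sum>k<L. real k * pK k) = (\<Sum>k<L. (\<integral>\<omega>. real k * indicator (A k) \<omega> \<partial>M))"
    proof (rule sum.cong[OF refl])
      fix k
      have inter: "A k \<inter> space M = A k" unfolding A_def by auto
      have "pK k = prob (A k)" unfolding pK_def A_def ..
      then show "real k * pK k = (\<integral>\<omega>. real k * indicator (A k) \<omega> \<partial>M)" by (simp add: inter)
    qed
    also have "\<dots> = (\<integral>\<omega>. (\<Sum>k<L. real k * indicator (A k) \<omega>) \<partial>M)"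
      by (rule Bochner_Integration.integral_sum[where f="\<lambda>k \<omega>. real k * indicator (A k) \<omega>", symmetric]) (use Ai in auto)
    also have "\<dots> \<le> (\<integral>\<omega>. real_of_int (X 0 \<omega>) + 1 \<partial>M)"
    proof (rule integral_mono)
      show "integrable M (\<lambda>\<omega>. \<Sum>k<L. real k * indicator (A k) \<omega>)"
        by (rule Bochner_Integration.integrable_sum, rule integrable_mult_right, rule Ai)
      show "integrable M (\<lambda>\<omega>. real_of_int (X 0 \<omega>) + 1)" using int by auto
      fix \<omega> assume w: "\<omega> \<in> space M"
      define k0 where "k0 = nat (X 0 \<omega> + 1)"
      have k0: "real k0 = real_of_int (X 0 \<omega>) + 1" using Xlb[OF w, of 0] unfolding k0_def by simp
      have "(\<Sum>k<L. real k * indicator (A k) \<omega>) = (\<Sum>k\<in>{..<L}. if k = k0 then real k0 else 0)"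
        by (rule sum.cong[OF refl]) (use w Xlb[OF w, of 0] in \<open>auto simp: indicator_def A_def k0_def\<close>)
      also have "\<dots> \<le> real k0" by (simp add: sum.delta)
      finally show "(\<Sum>k<L. real k * indicator (A k) \<omega>) \<le> real_of_int (X 0 \<omega>) + 1" using k0 by simp
    qed
    also have "\<dots> = (\<integral>\<omega>. real_of_int (X 0 \<omega>) \<partial>M) + 1"
      using int by (simp add: prob_space)
    also have "\<dots> \<le> 1" using neg by simp
    finally show ?thesis .
  qed
  show s: "summable (\<lambda>k. real k * pK k)"
    by (rule summableI_nonneg_bounded[where x=1]) (use part pK_nn in auto)
  show "(\<Sum>k. real k * pK k) \<le> 1" by (rule suminf_le_const[OF s part])
qed

lemma q0_one:
  assumes int: "integrable M (\<lambda>\<omega>. real_of_int (X 0 \<omega>))" and neg: "(\<integral>\<omega>. real_of_int (X 0 \<omega>) \<partial>M) \<le> 0"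
    and pos: "prob {\<omega> \<in> space M. X 0 \<omega> = -1} > 0"
  shows "q0 = 1"
proof (rule fixpoint_one[OF pK_nn pK_sums pK_mean[OF int neg] _ _ _ q0_fix])
  show "pK 0 > 0" using pos by (simp add: pK_pX pX_def)
  show "0 \<le> q0" by (simp add: q0_def)
  show "q0 \<le> 1" by (simp add: q0_def)
qed

lemma Fs_prob:
  assumes q: "q0 = 1"
  shows "plane_tree t \<Longrightarrow> finite t \<Longrightarrow> \<forall>u\<in>t. length u \<le> n \<Longrightarrow> prob (ev (Fs n t)) = Pi_t pK t n"
proof (induction n arbitrary: t)
  case 0
  have "t = {[]}" using 0 unfolding plane_tree_def by auto
  then show ?case using q by (simp add: Fs0 q0_def Pi_t_def)
next
  case (Suc n)
  have "prob (ev (Fs (Suc n) t)) = pK (nchild t []) * (\<Prod>k<nchild t []. prob (ev (Fs n (sub t k))))"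
    by (rule rec_prob[OF Suc.prems])
  also have "(\<Prod>k<nchild t []. prob (ev (Fs n (sub t k)))) = (\<Prod>k<nchild t []. Pi_t pK (sub t k) n)"
    by (rule prod.cong[OF refl]) (use Suc.IH sub_plane[OF Suc.prems(1,2) _ Suc.prems(3)] in auto)
  finally show ?case using Pi_t_Suc[OF Suc.prems(1,2)] by simp
qed

end

theorem proposition4p13:
  fixes M :: "'a measure" and X :: "int \<Rightarrow> 'a \<Rightarrow> int"
  assumes "prob_space M"
    and "\<And>i. X i \<in> measurable M (count_space UNIV)"
    and "prob_space.indep_vars M (\<lambda>_. count_space UNIV) X UNIV"
    and "\<And>i. distr M (count_space UNIV) (X i) = distr M (count_space UNIV) (X 0)"
    and "\<And>i \<omega>. \<omega> \<in> space M \<Longrightarrow> X i \<omega> \<ge> -1"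
    and "integrable M (\<lambda>\<omega>. real_of_int (X 0 \<omega>))"
    and "measure M {\<omega> \<in> space M. X 0 \<omega> = -1} > 0"
    and "(\<integral>\<omega>. real_of_int (X 0 \<omega>) \<partial>M) \<le> 0"
  shows "ordered_GW M (\<lambda>\<omega>. desc_tree (\<lambda>n. X n \<omega>))
           (\<lambda>k. measure M {\<omega> \<in> space M. X 0 \<omega> + 1 = int k})"
proof -
  interpret rwalk M X
    by (rule rwalk.intro[OF assms(1)], unfold_locales) (use assms in auto)
  have q: "q0 = 1" by (rule q0_one[OF assms(6,8,7)])
  show ?thesis unfolding ordered_GW_def
  proof (intro allI impI conjI)
    fix n t assume t: "finite t \<and> plane_tree t \<and> (\<forall>u\<in>t. length u \<le> n)"
    define E where "E = {\<omega> \<in> space M. trunc (desc_tree (\<lambda>n. X n \<omega>)) n = t}"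
    have XsE: "(\<lambda>n. X n \<omega>) = Xs \<omega>" for \<omega> by (simp add: Xs_def)
    have Ee: "E \<in> events" unfolding E_def XsE using pred_trunc by (simp add: pred_def)
    show "{\<omega> \<in> space M. trunc (desc_tree (\<lambda>n. X n \<omega>)) n = t} \<in> events" using Ee unfolding E_def .
    have sub: "ev (Fs n t) \<subseteq> E" unfolding E_def ev_def Fs_def XsE by auto
    have diff: "E - ev (Fs n t) \<subseteq> space M - ev (\<lambda>y. hashit y 0)"
      unfolding E_def ev_def Fs_def XsE by auto
    have hm: "ev (\<lambda>y. hashit y 0) \<in> events" using Fs_meas[of 0 "{[]}"] by (simp add: Fs0_fun)
    have "prob (E - ev (Fs n t)) \<le> prob (space M - ev (\<lambda>y. hashit y 0))"
      by (rule finite_measure_mono[OF diff]) (use hm in auto)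
    also have "\<dots> = 1 - q0"
      unfolding q0_def by (rule prob_compl[OF hm])
    finally have "prob (E - ev (Fs n t)) = 0" using q measure_nonneg[of M "E - ev (Fs n t)"] by simp
    moreover have "prob (E - ev (Fs n t)) = prob E - prob (ev (Fs n t))"
      by (rule finite_measure_Diff[OF Ee Fs_meas sub])
    ultimately have "prob E = prob (ev (Fs n t))" by simp
    also have "\<dots> = Pi_t pK t n" using Fs_prob[OF q] t by blast
    finally show "measure M {\<omega> \<in> space M. trunc (desc_tree (\<lambda>n. X n \<omega>)) n = t} =
          (\<Prod>u\<in>{u \<in> t. length u < n}. measure M {\<omega> \<in> space M. X 0 \<omega> + 1 = int (nchild t u)})"
      unfolding E_def Pi_t_def pK_def .
  qed
qed

end
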